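(* For any $\alpha>1$, $\mathcal{D}_\alpha\in\{\mathcal{F}_\alpha,\mathcal{P}_\alpha\}$ and learning rate $\eta>0$, FTPL with geometric resampling with perturbation distribution $\mathcal{D}_\alpha$ satisfies $$\mathcal{R}(T)\le\sum_{t=1}^T\mathbb{E}\left[\langle\hat\ell_t,w_t-w_{t+1}\rangle\right]+\frac{\left(\frac{\alpha}{\alpha-1}m^{1-\frac1\alpha}+\Gamma\left(1-\frac1\alpha\right)\right)(d+1)^{\frac1\alpha}+m}{\eta}\quad\text{if }\mathcal{D}_\alpha=\mathcal{F}_\alpha,$$ $$\mathcal{R}(T)\le\sum_{t=1}^T\mathbb{E}\left[\langle\hat\ell_t,w_t-w_{t+1}\rangle\right]+\frac{\left(\frac{\alpha}{\alpha-1}m^{1-\frac1\alpha}+\Gamma\left(1-\frac1\alpha\right)\right)(d+1)^{\frac1\alpha}}{\eta}\quad\text{if }\mathcal{D}_\alpha=\mathcal{P}_\alpha.$$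
   Context: Size-invariant semi-bandit: integers $1\le m\le d$, horizon $T$, action set $\mathcal{A}=\{a\in\{0,1\}^d:\|a\|_1=m\}$. In each round $t\in[T]$ an adversary chooses $\ell_t\in[0,1]^d$ (possibly depending on the past), the learner chooses $a_t\in\mathcal{A}$, incurs $\langle\ell_t,a_t\rangle$ and observes $\ell_{t,i}$ for $i$ with $a_{t,i}=1$. Pseudo-regret $\mathcal{R}(T)=\mathbb{E}[\sum_{t=1}^T\langle\ell_t,a_t-a^*\rangle]$ with $a^*\in\arg\min_{a\in\mathcal{A}}\mathbb{E}[\sum_t\langle\ell_t,a\rangle]$. Fréchet $\mathcal{F}_\alpha$: CDF $F(x)=e^{-1/x^\alpha}$, $x\ge0$; Pareto $\mathcal{P}_\alpha$: CDF $F(x)=1-x^{-\alpha}$, $x\ge1$. FTPL with geometric resampling: $\hat L_1=0$; in round $t$ sample $r_t$ with i.i.d. coordinates from the perturbation distribution $\mathcal{D}$, play $a_t\in\arg\min_{a\in\mathcal{A}}a^\top(\eta\hat L_t-r_t)$; GR: $K=0$, $s=a_t$; repeat {$K\leftarrow K+s$; draw fresh $r'$ with i.i.d. coordinates from $\mathcal{D}$; $a'\in\arg\min_{a\in\mathcal{A}}a^\top(\eta\hat L_t-r')$; $s\leftarrow s\circ(\mathbf 1_d-a')$} until $s=0$; $\widehat{w_{t,i}^{-1}}=K_i$ for $a_{t,i}=1$; $\hat\ell_t=\sum_{i:a_{t,i}=1}\ell_{t,i}\widehat{w_{t,i}^{-1}}e_i$, $\hat L_{t+1}=\hat L_t+\hat\ell_t$.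 For $\lambda\in[0,\infty)^d$, $\phi_i(\lambda;\mathcal{D})$ is the probability, for $r$ with i.i.d. coordinates from $\mathcal{D}$, that $r_i-\lambda_i$ is among the $m$ largest of $\{r_j-\lambda_j:j\in[d]\}$; $\phi=(\phi_1,\dots,\phi_d)$ and $w_t=\phi(\eta\hat L_t;\mathcal{D})$ (the probability vector of selecting each base-arm in round $t$). $\Gamma$ is the gamma function. *)

theory Defs
  imports "HOL-Probability.Probability"
begin

text \<open>Base-arms are the indices 0..d-1; an action a in {0,1}^d with |a|_1 = m is
represented by its support, a subset of {..<d} of cardinality m.
Rounds are indexed 0..T-1 internally (round t here = round t+1 of the paper).\<close>

definition actions :: "nat \<Rightarrow> nat \<Rightarrow> nat set set" where
  "actions d m = {A. A \<subseteq> {..<d} \<and> card A = m}"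

definition frechet_cdf :: "real \<Rightarrow> real \<Rightarrow> real" where
  "frechet_cdf \<alpha> x = (if x > 0 then exp (- (x powr (-\<alpha>))) else 0)"

definition pareto_cdf :: "real \<Rightarrow> real \<Rightarrow> real" where
  "pareto_cdf \<alpha> x = (if x \<ge> 1 then 1 - x powr (-\<alpha>) else 0)"

text \<open>This is an element of argmax over actions of the sum of v over the action, i.e.
with v = r - eta*L an element of argmin_a a^T(eta L - r).\<close>
definition topm :: "nat \<Rightarrow> nat \<Rightarrow> (nat \<Rightarrow> real) \<Rightarrow> nat set" where
  "topm d m v = {i. i < d \<and> card {j. j < d \<and> (v j > v i \<or> (v j = v i \<and> j < i))} < m}"

definition play :: "nat \<Rightarrow> nat \<Rightarrow> real \<Rightarrow> (nat \<Rightarrow> real) \<Rightarrow> (nat \<Rightarrow> real) \<Rightarrow> nat set" where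
  "play d m \<eta> L r = topm d m (\<lambda>i. r i - \<eta> * L i)"

text \<open>Sample space: omega (t,k,i) is coordinate i of the k-th perturbation vector drawn in
round t; k = 0 is the perturbation r_t, k >= 1 are the fresh draws r' of geometric resampling.\<close>
type_synonym omega = "nat \<times> nat \<times> nat \<Rightarrow> real"

definition Omega :: "real measure \<Rightarrow> omega measure" where
  "Omega D = (\<Pi>\<^sub>M _\<in>(UNIV :: (nat \<times> nat \<times> nat) set). D)"

definition pert :: "omega \<Rightarrow> nat \<Rightarrow> nat \<Rightarrow> nat \<Rightarrow> real" where
  "pert \<omega> t k = (\<lambda>i. \<omega> (t, k, i))"

text \<open>Geometric resampling counter: K_i = number of resampling iterations until coordinate i
is selected by a fresh draw (the loop adds s to K and removes i from s when a'_i = 1).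
On the null event that this never happens we set it to 0.\<close>
definition Kcount :: "nat \<Rightarrow> nat \<Rightarrow> real \<Rightarrow> (nat \<Rightarrow> real) \<Rightarrow> omega \<Rightarrow> nat \<Rightarrow> nat \<Rightarrow> nat" where
  "Kcount d m \<eta> L \<omega> t i =
     (if \<exists>k\<ge>1. i \<in> play d m \<eta> L (pert \<omega> t k)
      then (LEAST k. k \<ge> 1 \<and> i \<in> play d m \<eta> L (pert \<omega> t k)) else 0)"

definition est :: "nat \<Rightarrow> nat \<Rightarrow> real \<Rightarrow> (nat \<Rightarrow> real) \<Rightarrow> (nat \<Rightarrow> real) \<Rightarrow> omega \<Rightarrow> nat \<Rightarrow> nat \<Rightarrow> real" where
  "est d m \<eta> L lt \<omega> t i =
     (if i \<in> play d m \<eta> L (pert \<omega> t 0) then lt i * real (Kcount d m \<eta> L \<omega> t i) else 0)"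

text \<open>The adversary: ell t omega i is the loss of base-arm i in round t (chosen as a function
of the past).  Lhat t omega = cumulative estimated loss before round t.\<close>
primrec Lhat :: "nat \<Rightarrow> nat \<Rightarrow> real \<Rightarrow> (nat \<Rightarrow> omega \<Rightarrow> nat \<Rightarrow> real) \<Rightarrow> nat \<Rightarrow> omega \<Rightarrow> nat \<Rightarrow> real" where
  "Lhat d m \<eta> ell 0 \<omega> = (\<lambda>i. 0)"
| "Lhat d m \<eta> ell (Suc t) \<omega> =
     (\<lambda>i. Lhat d m \<eta> ell t \<omega> i + est d m \<eta> (Lhat d m \<eta> ell t \<omega>) (ell t \<omega>) \<omega> t i)"

definition lhat :: "nat \<Rightarrow> nat \<Rightarrow> real \<Rightarrow> (nat \<Rightarrow> omega \<Rightarrow> nat \<Rightarrow> real) \<Rightarrow> nat \<Rightarrow> omega \<Rightarrow> nat \<Rightarrow> real" where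
  "lhat d m \<eta> ell t \<omega> = est d m \<eta> (Lhat d m \<eta> ell t \<omega>) (ell t \<omega>) \<omega> t"

definition action :: "nat \<Rightarrow> nat \<Rightarrow> real \<Rightarrow> (nat \<Rightarrow> omega \<Rightarrow> nat \<Rightarrow> real) \<Rightarrow> nat \<Rightarrow> omega \<Rightarrow> nat set" where
  "action d m \<eta> ell t \<omega> = play d m \<eta> (Lhat d m \<eta> ell t \<omega>) (pert \<omega> t 0)"

definition phi :: "nat \<Rightarrow> nat \<Rightarrow> real measure \<Rightarrow> (nat \<Rightarrow> real) \<Rightarrow> nat \<Rightarrow> real" where
  "phi d m D lam i =
     measure (\<Pi>\<^sub>M _\<in>{..<d}. D) {r \<in> space (\<Pi>\<^sub>M _\<in>{..<d}. D). i \<in> topm d m (\<lambda>j. r j - lam j)}"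

definition wprob :: "nat \<Rightarrow> nat \<Rightarrow> real \<Rightarrow> real measure \<Rightarrow> (nat \<Rightarrow> omega \<Rightarrow> nat \<Rightarrow> real) \<Rightarrow> nat \<Rightarrow> omega \<Rightarrow> nat \<Rightarrow> real" where
  "wprob d m \<eta> D ell t \<omega> = phi d m D (\<lambda>j. \<eta> * Lhat d m \<eta> ell t \<omega> j)"

definition admissible_adv :: "nat \<Rightarrow> real measure \<Rightarrow> (nat \<Rightarrow> omega \<Rightarrow> nat \<Rightarrow> real) \<Rightarrow> bool" where
  "admissible_adv d D ell \<longleftrightarrow>
     (\<forall>t \<omega> i. i < d \<longrightarrow> 0 \<le> ell t \<omega> i \<and> ell t \<omega> i \<le> 1) \<and>
     (\<forall>t \<omega> \<omega>'. (\<forall>s k i. s < t \<longrightarrow> \<omega> (s, k, i) = \<omega>' (s, k, i)) \<longrightarrow> ell t \<omega> = ell t \<omega>') \<and>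
     (\<forall>t i. (\<lambda>\<omega>. ell t \<omega> i) \<in> borel_measurable (Omega D))"

definition regret :: "nat \<Rightarrow> nat \<Rightarrow> real \<Rightarrow> real measure \<Rightarrow> (nat \<Rightarrow> omega \<Rightarrow> nat \<Rightarrow> real) \<Rightarrow> nat \<Rightarrow> real" where
  "regret d m \<eta> D ell T =
     (\<integral>\<omega>. (\<Sum>t<T. \<Sum>i\<in>action d m \<eta> ell t \<omega>. ell t \<omega> i) \<partial>Omega D)
     - Min ((\<lambda>A. \<integral>\<omega>. (\<Sum>t<T. \<Sum>i\<in>A. ell t \<omega> i) \<partial>Omega D) ` actions d m)"

definition stab_term :: "nat \<Rightarrow> nat \<Rightarrow> real \<Rightarrow> real measure \<Rightarrow> (nat \<Rightarrow> omega \<Rightarrow> nat \<Rightarrow> real) \<Rightarrow> nat \<Rightarrow> real" where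
  "stab_term d m \<eta> D ell T =
     (\<Sum>t<T. \<integral>\<omega>. (\<Sum>i<d. lhat d m \<eta> ell t \<omega> i *
        (wprob d m \<eta> D ell t \<omega> i - wprob d m \<eta> D ell (Suc t) \<omega> i)) \<partial>Omega D)"

end

theory Submission
  imports Defs
begin


definition prec :: "(nat \<Rightarrow> real) \<Rightarrow> nat \<Rightarrow> nat \<Rightarrow> bool" where
  "prec v j i \<longleftrightarrow> (v j > v i \<or> (v j = v i \<and> j < i))"

definition rnk :: "nat \<Rightarrow> (nat \<Rightarrow> real) \<Rightarrow> nat \<Rightarrow> nat" where
  "rnk d v i = card {j. j < d \<and> prec v j i}"

lemma topm_alt: "topm d m v = {i. i < d \<and> rnk d v i < m}"
  unfolding topm_def rnk_def prec_def by simp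

lemma topm_sub: "topm d m v \<subseteq> {..<d}"
  unfolding topm_def by auto

lemma prec_trans: "prec v a b \<Longrightarrow> prec v b c \<Longrightarrow> prec v a c"
  unfolding prec_def by auto

lemma prec_irrefl: "\<not> prec v a a"
  unfolding prec_def by auto

lemma prec_total: "a \<noteq> b \<Longrightarrow> prec v a b \<or> prec v b a"
  unfolding prec_def by auto

lemma rnk_mono: assumes "prec v i i'" "i < d" shows "rnk d v i < rnk d v i'"
proof -
  have "{j. j < d \<and> prec v j i} \<subset> {j. j < d \<and> prec v j i'}"
    using assms prec_trans prec_irrefl by blast
  then show ?thesis unfolding rnk_def by (intro psubset_card_mono) auto
qed

lemma rnk_less: assumes "i < d" shows "rnk d v i < d"
proof -
  have "{j. j < d \<and> prec v j i} \<subseteq> {..<d} - {i}" using prec_irrefl by auto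
  then have "rnk d v i \<le> card ({..<d} - {i})" unfolding rnk_def by (intro card_mono) auto
  then show ?thesis using assms by simp
qed

lemma rnk_inj: "inj_on (rnk d v) {..<d}"
proof (rule inj_onI)
  fix a b assume "a \<in> {..<d}" "b \<in> {..<d}" "rnk d v a = rnk d v b"
  then show "a = b" using prec_total[of a b v] rnk_mono[of v a b d] rnk_mono[of v b a d] by force
qed

lemma rnk_bij: "bij_betw (rnk d v) {..<d} {..<d}"
proof -
  have "rnk d v ` {..<d} \<subseteq> {..<d}" using rnk_less by auto
  moreover have "card (rnk d v ` {..<d}) = card {..<d::nat}"
    using card_image[OF rnk_inj] by simp
  ultimately have "rnk d v ` {..<d} = {..<d}" by (intro card_subset_eq) auto
  then show ?thesis using rnk_inj by (auto simp: bij_betw_def)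
qed

lemma card_topm: assumes "m \<le> d" shows "card (topm d m v) = m"
proof -
  have img: "rnk d v ` {..<d} = {..<d}" using rnk_bij[of d v] by (simp add: bij_betw_def)
  have "rnk d v ` (topm d m v) = {..<m}"
  proof
    show "rnk d v ` topm d m v \<subseteq> {..<m}" unfolding topm_alt by auto
    show "{..<m} \<subseteq> rnk d v ` topm d m v"
    proof
      fix y assume "y \<in> {..<m}"
      then have "y \<in> rnk d v ` {..<d}" using img assms by auto
      then obtain x where "x < d" "y = rnk d v x" by auto
      then show "y \<in> rnk d v ` topm d m v" using \<open>y \<in> {..<m}\<close> unfolding topm_alt by auto
    qed
  qed
  moreover have "inj_on (rnk d v) (topm d m v)" using rnk_inj topm_sub by (rule inj_on_subset)
  ultimately show ?thesis using card_image by fastforce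
qed

lemma topm_actions: "m \<le> d \<Longrightarrow> topm d m v \<in> actions d m"
  using card_topm topm_sub unfolding actions_def by auto

lemma topm_ge: assumes "i \<in> topm d m v" "j < d" "j \<notin> topm d m v" shows "v j \<le> v i"
proof -
  have "rnk d v i < rnk d v j" using assms unfolding topm_alt by auto
  moreover have "i \<noteq> j" using assms by auto
  ultimately have "prec v i j" using prec_total[of i j v] rnk_mono[of v j i d] assms by force
  then show ?thesis unfolding prec_def by auto
qed

lemma topm_opt: assumes "A \<in> actions d m" "m \<le> d"
  shows "(\<Sum>i\<in>A. v i) \<le> (\<Sum>i\<in>topm d m v. v i)"
proof -
  let ?T = "topm d m v"
  have fA: "finite A" and Asub: "A \<subseteq> {..<d}" and cA: "card A = m" using assms(1) unfolding actions_def
    by (auto intro: finite_subset)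
  have fT: "finite ?T" using topm_sub by (rule finite_subset) auto
  have cT: "card ?T = m" using card_topm assms by auto
  have c1: "card (A - ?T) = card (?T - A)"
    using card_Diff_subset_Int[of A ?T] card_Diff_subset_Int[of ?T A] fA fT cA cT
    by (simp add: Int_commute)
  have ge: "\<And>a b. a \<in> A - ?T \<Longrightarrow> b \<in> ?T - A \<Longrightarrow> v a \<le> v b"
    using topm_ge Asub by blast
  have key: "(\<Sum>i\<in>A - ?T. v i) \<le> (\<Sum>i\<in>?T - A. v i)"
  proof (cases "?T - A = {}")
    case True
    then have "card (A - ?T) = 0" using c1 by (metis card.empty)
    then have "A - ?T = {}" using fA by simp
    then show ?thesis using True by simp
  next
    case False
    define th where "th = Min (v ` (?T - A))"
    have fin: "finite (?T - A)" using fT by simp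
    have "(\<Sum>i\<in>A - ?T. v i) \<le> (\<Sum>i\<in>A - ?T. th)"
    proof (rule sum_mono)
      fix a assume a: "a \<in> A - ?T"
      have "th \<in> v ` (?T - A)" unfolding th_def using Min_in[of "v ` (?T - A)"] fin False by blast
      then obtain b where "b \<in> ?T - A" "th = v b" by auto
      then show "v a \<le> th" using ge a by auto
    qed
    also have "\<dots> = (\<Sum>i\<in>?T - A. th)" using c1 by simp
    also have "\<dots> \<le> (\<Sum>i\<in>?T - A. v i)"
      by (rule sum_mono) (use fin in \<open>auto simp: th_def\<close>)
    finally show ?thesis .
  qed
  have "(\<Sum>i\<in>A. v i) = (\<Sum>i\<in>A - ?T. v i) + (\<Sum>i\<in>A \<inter> ?T. v i)"
    using fA by (metis sum.Int_Diff add.commute)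
  also have "\<dots> \<le> (\<Sum>i\<in>?T - A. v i) + (\<Sum>i\<in>A \<inter> ?T. v i)" using key by simp
  also have "\<dots> = (\<Sum>i\<in>?T. v i)"
    using fT by (metis sum.Int_Diff add.commute Int_commute)
  finally show ?thesis .
qed



lemma btl:
  assumes md: "m \<le> d" and A: "A \<in> actions d m" and L: "\<And>s j. L (Suc s) j = L s j + l s j"
  shows "\<eta> * (\<Sum>s<n. \<Sum>i\<in>topm d m (\<lambda>j. r j - \<eta> * L (Suc s) j). l s i)
     \<le> (\<Sum>i\<in>topm d m (\<lambda>j. r j - \<eta> * L 0 j). (r i - \<eta> * L 0 i)) - (\<Sum>i\<in>A. (r i - \<eta> * L n i))"
proof -
  define f where "f s = (\<Sum>i\<in>topm d m (\<lambda>j. r j - \<eta> * L s j). (r i - \<eta> * L s i))" for s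
  have step: "\<eta> * (\<Sum>i\<in>topm d m (\<lambda>j. r j - \<eta> * L (Suc s) j). l s i) \<le> f s - f (Suc s)" for s
  proof -
    let ?a = "topm d m (\<lambda>j. r j - \<eta> * L (Suc s) j)"
    have "?a \<in> actions d m" using topm_actions md by blast
    then have "(\<Sum>i\<in>?a. (r i - \<eta> * L s i)) \<le> f s"
      unfolding f_def by (rule topm_opt[OF _ md])
    moreover have "f (Suc s) = (\<Sum>i\<in>?a. (r i - \<eta> * L s i)) - \<eta> * (\<Sum>i\<in>?a. l s i)"
      unfolding f_def L by (simp add: algebra_simps sum_subtractf sum_distrib_left sum.distrib)
    ultimately show ?thesis by simp
  qed
  have tel: "\<eta> * (\<Sum>s<n. \<Sum>i\<in>topm d m (\<lambda>j. r j - \<eta> * L (Suc s) j). l s i) \<le> f 0 - f n"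
  proof (induction n)
    case 0 then show ?case by simp
  next
    case (Suc n)
    then show ?case using step[of n] by (simp add: distrib_left)
  qed
  have "(\<Sum>i\<in>A. (r i - \<eta> * L n i)) \<le> f n"
    unfolding f_def by (rule topm_opt[OF A md])
  then show ?thesis using tel unfolding f_def by simp
qed

lemma top_sum_bound:
  assumes "m \<le> d"
  shows "(\<Sum>i\<in>topm d m v. r i) \<le> real m * c + (\<Sum>i<d. max 0 (r i - c))"
proof -
  have "(\<Sum>i\<in>topm d m v. r i) \<le> (\<Sum>i\<in>topm d m v. c + max 0 (r i - c))"
    by (rule sum_mono) auto
  also have "\<dots> = real m * c + (\<Sum>i\<in>topm d m v. max 0 (r i - c))"
    using card_topm[OF assms] by (simp add: sum.distrib)
  also have "(\<Sum>i\<in>topm d m v. max 0 (r i - c)) \<le> (\<Sum>i<d. max 0 (r i - c))"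
    by (rule sum_mono2) (use topm_sub in auto)
  finally show ?thesis by simp
qed



lemma tail_nn:
  assumes D: "real_distribution D" and c: "c \<ge> 1" and a: "\<alpha> > 1"
    and tail: "\<And>x. x \<ge> 1 \<Longrightarrow> 1 - cdf D x \<le> x powr (-\<alpha>)"
  shows "(\<integral>\<^sup>+ x. ennreal (max 0 (x - c)) \<partial>D) \<le> ennreal (c powr (1 - \<alpha>) / (\<alpha> - 1))"
proof -
  interpret real_distribution D by fact
  interpret pair_sigma_finite D lborel
    by (intro pair_sigma_finite.intro prob_space_imp_sigma_finite sigma_finite_lborel) (rule prob_space_axioms)
  have eq1: "ennreal (max 0 (x - c)) = (\<integral>\<^sup>+ y. indicator {c..<x} y \<partial>lborel)" for x
    by (cases "c \<le> x") auto
  have meas: "(\<lambda>(x, y). indicator {c..<x} y :: ennreal) \<in> borel_measurable (D \<Otimes>\<^sub>M lborel)"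
  proof -
    have "(\<lambda>(x, y). indicator {c..<x} y :: ennreal) = (\<lambda>p. indicator {p. c \<le> snd p \<and> snd p < fst p} p)"
      by (auto simp: indicator_def fun_eq_iff)
    moreover have "{p \<in> space (D \<Otimes>\<^sub>M lborel). c \<le> snd p \<and> snd p < fst p} \<in> sets (D \<Otimes>\<^sub>M lborel)"
      by measurable
    moreover have "space (D \<Otimes>\<^sub>M lborel) = UNIV" by (simp add: space_pair_measure)
    ultimately show ?thesis by (simp add: borel_measurable_indicator)
  qed
  have "(\<integral>\<^sup>+ x. ennreal (max 0 (x - c)) \<partial>D) = (\<integral>\<^sup>+ x. \<integral>\<^sup>+ y. indicator {c..<x} y \<partial>lborel \<partial>D)"
    by (intro nn_integral_cong) (rule eq1)
  also have "\<dots> = (\<integral>\<^sup>+ y. \<integral>\<^sup>+ x. indicator {c..<x} y \<partial>D \<partial>lborel)"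
    using Fubini'[of "\<lambda>x y. indicator {c..<x} y"] meas by simp
  also have "\<dots> \<le> (\<integral>\<^sup>+ y. indicator {c..} y * ennreal (y powr (-\<alpha>)) \<partial>lborel)"
  proof (rule nn_integral_mono)
    fix y :: real
    have "(\<lambda>x. indicator {c..<x} y :: ennreal) = (\<lambda>x. indicator {c..} y * indicator {y<..} x)"
      by (auto simp: indicator_def fun_eq_iff)
    then have "(\<integral>\<^sup>+ x. indicator {c..<x} y \<partial>D) = indicator {c..} y * emeasure D {y<..}"
      by (simp add: nn_integral_cmult)
    also have "\<dots> \<le> indicator {c..} y * ennreal (y powr (-\<alpha>))"
    proof (cases "c \<le> y")
      case True
      have "emeasure D {y<..} = ennreal (measure D {y<..})" by (simp add: emeasure_eq_measure)
      also have "measure D {y<..} = 1 - cdf D y"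
      proof -
        have "{y<..} = space D - {..y}" by auto
        then show ?thesis by (simp add: prob_compl cdf_def del: space_eq_univ)
      qed
      also have "ennreal (1 - cdf D y) \<le> ennreal (y powr (-\<alpha>))"
        using tail[of y] True c by (intro ennreal_leI) auto
      finally show ?thesis using True by simp
    qed simp
    finally show "(\<integral>\<^sup>+ x. indicator {c..<x} y \<partial>D) \<le> indicator {c..} y * ennreal (y powr (-\<alpha>))" .
  qed
  also have "\<dots> = ennreal (c powr (1 - \<alpha>) / (\<alpha> - 1))"
  proof -
    have "((\<lambda>y. y powr (-\<alpha>)) has_integral -(c powr (-\<alpha>+1)) / (-\<alpha>+1)) {c..}"
      using has_integral_powr_to_inf[of "-\<alpha>" c] a c by simp
    then have "integral\<^sup>N lborel (\<lambda>y. ennreal (y powr (-\<alpha>)) * indicator {c..} y) = ennreal (-(c powr (-\<alpha>+1)) / (-\<alpha>+1))"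
      by (intro nn_integral_has_integral_lebesgue') auto
    moreover have "-(c powr (-\<alpha>+1)) / (-\<alpha>+1) = c powr (1 - \<alpha>) / (\<alpha> - 1)"
      using a by (simp add: field_simps)
    ultimately show ?thesis by (simp add: mult.commute)
  qed
  finally show ?thesis .
qed

lemma tail_int:
  assumes D: "real_distribution D" and c: "c \<ge> 1" and a: "\<alpha> > 1"
    and tail: "\<And>x. x \<ge> 1 \<Longrightarrow> 1 - cdf D x \<le> x powr (-\<alpha>)"
  shows "integrable D (\<lambda>x. max 0 (x - c))"
    and "(\<integral>x. max 0 (x - c) \<partial>D) \<le> c powr (1 - \<alpha>) / (\<alpha> - 1)"
proof -
  interpret real_distribution D by fact
  have nn: "(\<integral>\<^sup>+ x. ennreal (max 0 (x - c)) \<partial>D) \<le> ennreal (c powr (1 - \<alpha>) / (\<alpha> - 1))"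
    by (rule tail_nn[OF assms])
  show "integrable D (\<lambda>x. max 0 (x - c))"
    by (rule integrableI_nonneg) (use nn in \<open>auto simp: top_unique intro: le_less_trans\<close>)
  have "(\<integral>x. max 0 (x - c) \<partial>D) = enn2real (\<integral>\<^sup>+ x. ennreal (max 0 (x - c)) \<partial>D)"
    by (rule integral_eq_nn_integral) auto
  also have "\<dots> \<le> c powr (1 - \<alpha>) / (\<alpha> - 1)"
    using nn a c by (intro enn2real_leI) auto
  finally show "(\<integral>x. max 0 (x - c) \<partial>D) \<le> c powr (1 - \<alpha>) / (\<alpha> - 1)" .
qed

lemma pos_tail:
  assumes D: "real_distribution D" and lt1: "\<And>x. cdf D x < 1"
  shows "0 < measure D {M<..}"
proof -
  interpret real_distribution D by fact
  have "{M<..} = space D - {..M}" by auto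
  then have "measure D {M<..} = 1 - cdf D M" by (simp add: prob_compl cdf_def del: space_eq_univ)
  then show ?thesis using lt1[of M] by simp
qed

lemma pos_AE:
  assumes D: "real_distribution D" and z: "cdf D 0 = 0"
  shows "AE x in D. 0 < x"
proof -
  interpret real_distribution D by fact
  have "{..0::real} \<in> null_sets D"
    using z by (auto simp: cdf_def null_sets_def emeasure_eq_measure)
  from AE_not_in[OF this] show ?thesis by (auto simp: not_le)
qed



lemma card_sum_if: fixes d :: nat shows "real (card {j. j < d \<and> P j}) = (\<Sum>j<d. if P j then 1 else 0)"
proof -
  have "{j. j < d \<and> P j} = {j\<in>{..<d}. P j}" by auto
  then have "real (card {j. j < d \<and> P j}) = (\<Sum>j\<in>{j\<in>{..<d}. P j}. 1)" by simp
  also have "\<dots> = (\<Sum>j<d. if P j then 1 else 0)" by (rule sum.inter_filter) simp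
  finally show ?thesis .
qed

lemma topm_iff_sum: "i \<in> topm d m v \<longleftrightarrow> i < d \<and>
   (\<Sum>j<d. if v j > v i \<or> (v j = v i \<and> j < i) then 1 else 0 :: real) < real m"
  unfolding topm_def using card_sum_if[of d "\<lambda>j. v j > v i \<or> (v j = v i \<and> j < i)"]
  by (metis (no_types, lifting) mem_Collect_eq of_nat_less_iff)

lemma pred_topm[measurable]:
  assumes f: "\<And>j. j < d \<Longrightarrow> f j \<in> borel_measurable M"
  shows "Measurable.pred M (\<lambda>x. i \<in> topm d m (\<lambda>j. f j x))"
proof (cases "i < d")
  case True
  note [measurable] = f True
  have "Measurable.pred M (\<lambda>x. i < d \<and>
     (\<Sum>j<d. if f j x > f i x \<or> (f j x = f i x \<and> j < i) then 1 else 0 :: real) < real m)"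
    by measurable
  then show ?thesis by (subst topm_iff_sum) 
next
  case False
  then have "(\<lambda>x. i \<in> topm d m (\<lambda>j. f j x)) = (\<lambda>x. False)" using topm_sub[of d m] by (auto simp: fun_eq_iff subset_iff)
  then show ?thesis by simp
qed

lemma phi_pos:
  assumes D: "real_distribution D" and lt1: "\<And>x. cdf D x < 1" and gt0: "cdf D M' > 0"
    and i: "i < d" and m: "1 \<le> m"
  shows "0 < phi d m D lam i"
proof -
  interpret real_distribution D by fact
  interpret PD: product_prob_space "\<lambda>_::nat. D" "{..<d}"
    by unfold_locales
  define S where "S = (\<Sum>j<d. \<bar>lam j\<bar>)"
  have S: "\<bar>lam j\<bar> \<le> S" if "j < d" for j
    unfolding S_def using that by (intro member_le_sum) auto
  define M where "M = M' + 2 * S + 1"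
  define A where "A j = (if j = i then {M<..} else {..M'})" for j
  let ?R = "PiM {..<d} (\<lambda>_::nat. D)"
  let ?E = "{r \<in> space ?R. i \<in> topm d m (\<lambda>j. r j - lam j)}"
  have sub: "Pi\<^sub>E {..<d} A \<subseteq> ?E"
  proof
    fix r assume r: "r \<in> Pi\<^sub>E {..<d} A"
    have emp: "{j. j < d \<and> (r j - lam j > r i - lam i \<or> (r j - lam j = r i - lam i \<and> j < i))} = {}"
    proof (rule ccontr)
      assume "\<not> ?thesis"
      then obtain j where j: "j < d" "r j - lam j > r i - lam i \<or> (r j - lam j = r i - lam i \<and> j < i)" by auto
      then have "j \<noteq> i" by auto
      have "r j \<in> A j" "r i \<in> A i" using r j(1) i by (auto simp: PiE_iff)
      then have "r j \<le> M'" "r i > M" using \<open>j \<noteq> i\<close> by (auto simp: A_def)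
      then show False using S[of i] S[of j] j i unfolding M_def by auto
    qed
    have "i \<in> topm d m (\<lambda>j. r j - lam j)" unfolding topm_def mem_Collect_eq using i m by (subst emp) simp
    moreover have "r \<in> space ?R" using r by (auto simp: space_PiM PiE_iff)
    ultimately show "r \<in> ?E" by simp
  qed
  have pos: "0 < measure D (A j)" for j
  proof (cases "j = i")
    case True then show ?thesis using pos_tail[OF D lt1] by (simp add: A_def)
  next
    case False then show ?thesis using gt0 by (simp add: A_def cdf_def)
  qed
  have "emeasure ?R (Pi\<^sub>E {..<d} A) = (\<Prod>j<d. emeasure D (A j))"
    by (rule PD.emeasure_PiM) (auto simp: A_def)
  also have "\<dots> = ennreal (\<Prod>j<d. measure D (A j))"
    by (simp add: emeasure_eq_measure prod_ennreal)
  finally have "measure ?R (Pi\<^sub>E {..<d} A) = (\<Prod>j<d. measure D (A j))"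
    by (simp add: PD.P.emeasure_eq_measure prod_nonneg)
  then have "0 < measure ?R (Pi\<^sub>E {..<d} A)" using pos by (simp add: prod_pos)
  also have "\<dots> \<le> measure ?R ?E"
  proof (rule PD.P.finite_measure_mono[OF sub])
    have [measurable]: "(\<lambda>r. r j - lam j) \<in> borel_measurable ?R" if "j < d" for j
    proof -
      have "(\<lambda>r. r j) \<in> measurable ?R D" using that by (intro measurable_component_singleton) auto
      then have "(\<lambda>r. r j) \<in> borel_measurable ?R" using measurable_cong_sets[OF refl events_eq_borel] by blast
      then show ?thesis by (intro borel_measurable_diff) auto
    qed
    show "?E \<in> sets ?R" by measurable
  qed
  finally show ?thesis unfolding phi_def .
qed


definition mixw :: "nat \<Rightarrow> omega \<Rightarrow> omega \<Rightarrow> omega" where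
  "mixw t \<omega>1 \<omega>2 = (\<lambda>x. if fst x = t then \<omega>2 x else \<omega>1 x)"

context
  fixes D :: "real measure"
  assumes D: "real_distribution D"
begin

interpretation real_distribution D by (rule D)
interpretation PO: product_prob_space "\<lambda>_::nat\<times>nat\<times>nat. D" UNIV by unfold_locales

lemma Omega_prob: "prob_space (Omega D)"
  unfolding Omega_def by (rule PO.P.prob_space_axioms)

lemma space_Omega[simp]: "space (Omega D) = UNIV"
  unfolding Omega_def by (simp add: space_PiM)

lemma coord_meas: "(\<lambda>\<omega>. \<omega> x) \<in> borel_measurable (Omega D)"
proof -
  have "(\<lambda>\<omega>. \<omega> x) \<in> measurable (Omega D) D" unfolding Omega_def
    by (rule measurable_component_singleton) auto
  then show ?thesis using measurable_cong_sets[OF refl events_eq_borel] by blast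
qed

lemma emb_eq: "prod_emb UNIV (\<lambda>_. D) J (Pi\<^sub>E J F) = {\<omega>. \<forall>j\<in>J. \<omega> j \<in> F j}"
  by (auto simp: prod_emb_def PiE_iff)

lemma mix_meas: "(\<lambda>p. mixw t (fst p) (snd p)) \<in> measurable (Omega D \<Otimes>\<^sub>M Omega D) (Omega D)"
proof -
  have "(\<lambda>p x. mixw t (fst p) (snd p) x) \<in> measurable (Omega D \<Otimes>\<^sub>M Omega D) (Omega D)"
    unfolding Omega_def
  proof (rule measurable_PiM_single')
    fix x :: "nat \<times> nat \<times> nat"
    have c: "(\<lambda>\<omega>. \<omega> x) \<in> measurable (PiM UNIV (\<lambda>_. D)) D"
      by (rule measurable_component_singleton) auto
    show "(\<lambda>p. mixw t (fst p) (snd p) x) \<in> measurable (PiM UNIV (\<lambda>_. D) \<Otimes>\<^sub>M PiM UNIV (\<lambda>_. D)) D"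
    proof (cases "fst x = t")
      case True
      then have "(\<lambda>p. mixw t (fst p) (snd p) x) = (\<lambda>\<omega>. \<omega> x) \<circ> snd" by (auto simp: mixw_def)
      then show ?thesis using c by (simp add: measurable_comp[OF measurable_snd])
    next
      case False
      then have "(\<lambda>p. mixw t (fst p) (snd p) x) = (\<lambda>\<omega>. \<omega> x) \<circ> fst" by (auto simp: mixw_def)
      then show ?thesis using c by (simp add: measurable_comp[OF measurable_fst])
    qed
  qed auto
  then show ?thesis by simp
qed

lemma mix_distr: "distr (Omega D \<Otimes>\<^sub>M Omega D) (Omega D) (\<lambda>p. mixw t (fst p) (snd p)) = Omega D"
proof -
  interpret pair_sigma_finite "Omega D" "Omega D"
    by (intro pair_sigma_finite.intro prob_space_imp_sigma_finite Omega_prob)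
  show ?thesis unfolding Omega_def
  proof (rule PO.PiM_eq)
    show "sets (distr (PiM UNIV (\<lambda>_. D) \<Otimes>\<^sub>M PiM UNIV (\<lambda>_. D)) (PiM UNIV (\<lambda>_. D)) (\<lambda>p. mixw t (fst p) (snd p))) = sets (PiM UNIV (\<lambda>_. D))"
      by simp
    fix J :: "(nat\<times>nat\<times>nat) set" and F assume J: "finite J" and F: "\<And>j. j \<in> J \<Longrightarrow> F j \<in> sets D"
    define J1 where "J1 = {j\<in>J. fst j \<noteq> t}"
    define J2 where "J2 = {j\<in>J. fst j = t}"
    have fin: "finite J1" "finite J2" using J by (auto simp: J1_def J2_def)
    have sets: "prod_emb UNIV (\<lambda>_. D) K (Pi\<^sub>E K F) \<in> sets (PiM UNIV (\<lambda>_. D))" if "K \<subseteq> J" for K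
      using that J F by (intro sets_PiM_I) (auto intro: finite_subset)
    have pre: "(\<lambda>p. mixw t (fst p) (snd p)) -` prod_emb UNIV (\<lambda>_. D) J (Pi\<^sub>E J F) \<inter> space (PiM UNIV (\<lambda>_. D) \<Otimes>\<^sub>M PiM UNIV (\<lambda>_. D))
        = prod_emb UNIV (\<lambda>_. D) J1 (Pi\<^sub>E J1 F) \<times> prod_emb UNIV (\<lambda>_. D) J2 (Pi\<^sub>E J2 F)"
      unfolding emb_eq by (auto simp: mixw_def J1_def J2_def space_pair_measure space_PiM)
    have "emeasure (distr (PiM UNIV (\<lambda>_. D) \<Otimes>\<^sub>M PiM UNIV (\<lambda>_. D)) (PiM UNIV (\<lambda>_. D)) (\<lambda>p. mixw t (fst p) (snd p))) (prod_emb UNIV (\<lambda>_. D) J (Pi\<^sub>E J F))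
      = emeasure (PiM UNIV (\<lambda>_. D) \<Otimes>\<^sub>M PiM UNIV (\<lambda>_. D)) (prod_emb UNIV (\<lambda>_. D) J1 (Pi\<^sub>E J1 F) \<times> prod_emb UNIV (\<lambda>_. D) J2 (Pi\<^sub>E J2 F))"
      using mix_meas[of t] sets[of J] by (subst emeasure_distr) (auto simp: Omega_def pre)
    also have "\<dots> = emeasure (PiM UNIV (\<lambda>_. D)) (prod_emb UNIV (\<lambda>_. D) J1 (Pi\<^sub>E J1 F)) * emeasure (PiM UNIV (\<lambda>_. D)) (prod_emb UNIV (\<lambda>_. D) J2 (Pi\<^sub>E J2 F))"
      using sets[of J1] sets[of J2] unfolding J1_def J2_def
      by (intro sigma_finite_measure.emeasure_pair_measure_Times[OF prob_space_imp_sigma_finite[OF Omega_prob], unfolded Omega_def]) auto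
    also have "\<dots> = (\<Prod>j\<in>J1. emeasure D (F j)) * (\<Prod>j\<in>J2. emeasure D (F j))"
    proof -
      have e: "emeasure (PiM UNIV (\<lambda>_. D)) (prod_emb UNIV (\<lambda>_. D) K (Pi\<^sub>E K F)) = (\<Prod>j\<in>K. emeasure D (F j))" if "K \<subseteq> J" for K
        by (rule PO.emeasure_PiM_emb) (use J F that in \<open>auto intro: finite_subset\<close>)
      show ?thesis by (subst e, force simp: J1_def J2_def)+ simp
    qed
    also have "\<dots> = (\<Prod>j\<in>J. emeasure D (F j))"
    proof -
      have "J = J1 \<union> J2" "J1 \<inter> J2 = {}" by (auto simp: J1_def J2_def)
      then show ?thesis using fin by (simp add: prod.union_disjoint)
    qed
    finally show "emeasure (distr (PiM UNIV (\<lambda>_. D) \<Otimes>\<^sub>M PiM UNIV (\<lambda>_. D)) (PiM UNIV (\<lambda>_. D)) (\<lambda>p. mixw t (fst p) (snd p))) (prod_emb UNIV (\<lambda>_. D) J (Pi\<^sub>E J F)) = (\<Prod>j\<in>J. emeasure D (F j))" .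
  qed
qed

end


lemma topm_cong: "(\<And>j. j < d \<Longrightarrow> v j = v' j) \<Longrightarrow> topm d m v = topm d m v'"
proof -
  assume h: "\<And>j. j < d \<Longrightarrow> v j = v' j"
  have "{j. j < d \<and> (v j > v i \<or> (v j = v i \<and> j < i))} = {j. j < d \<and> (v' j > v' i \<or> (v' j = v' i \<and> j < i))}"
    if "i < d" for i using h that by auto
  then show ?thesis unfolding topm_def by auto
qed

definition blk :: "nat \<Rightarrow> nat \<Rightarrow> nat \<Rightarrow> omega \<Rightarrow> nat \<Rightarrow> real" where
  "blk d t k \<omega> = (\<lambda>j\<in>{..<d}. \<omega> (t, k, j))"

context
  fixes D :: "real measure"
  assumes D: "real_distribution D"
begin

interpretation real_distribution D by (rule D)
interpretation PO: product_prob_space "\<lambda>_::nat\<times>nat\<times>nat. D" UNIV by unfold_locales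
interpretation O: prob_space "Omega D" by (rule Omega_prob[OF D])

lemma nn_mix:
  assumes f: "f \<in> borel_measurable (Omega D)"
  shows "(\<integral>\<^sup>+\<omega>. f \<omega> \<partial>Omega D) = (\<integral>\<^sup>+\<omega>1. \<integral>\<^sup>+\<omega>2. f (mixw t \<omega>1 \<omega>2) \<partial>Omega D \<partial>Omega D)"
proof -
  have "(\<integral>\<^sup>+\<omega>. f \<omega> \<partial>Omega D) = (\<integral>\<^sup>+\<omega>. f \<omega> \<partial>distr (Omega D \<Otimes>\<^sub>M Omega D) (Omega D) (\<lambda>p. mixw t (fst p) (snd p)))"
    by (simp add: mix_distr[OF D])
  also have "\<dots> = (\<integral>\<^sup>+p. f (mixw t (fst p) (snd p)) \<partial>(Omega D \<Otimes>\<^sub>M Omega D))"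
    using f mix_meas[OF D, of t] by (intro nn_integral_distr) auto
  also have "\<dots> = (\<integral>\<^sup>+\<omega>1. \<integral>\<^sup>+\<omega>2. f (mixw t \<omega>1 \<omega>2) \<partial>Omega D \<partial>Omega D)"
    using f mix_meas[OF D, of t] by (subst O.nn_integral_fst[symmetric]) auto
  finally show ?thesis .
qed

lemma int_mix:
  fixes f :: "omega \<Rightarrow> real"
  assumes f: "integrable (Omega D) f"
  shows "(\<integral>\<omega>. f \<omega> \<partial>Omega D) = (\<integral>\<omega>1. \<integral>\<omega>2. f (mixw t \<omega>1 \<omega>2) \<partial>Omega D \<partial>Omega D)"
proof -
  interpret ps: pair_sigma_finite "Omega D" "Omega D"
    by (intro pair_sigma_finite.intro prob_space_imp_sigma_finite Omega_prob[OF D])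
  have i2: "integrable (Omega D \<Otimes>\<^sub>M Omega D) (\<lambda>p. f (mixw t (fst p) (snd p)))"
  proof -
    have "integrable (distr (Omega D \<Otimes>\<^sub>M Omega D) (Omega D) (\<lambda>p. mixw t (fst p) (snd p))) f"
      using f by (simp add: mix_distr[OF D])
    then show ?thesis using integrable_distr_eq[OF mix_meas[OF D, of t] borel_measurable_integrable[OF f]] by simp
  qed
  have "(\<integral>\<omega>. f \<omega> \<partial>Omega D) = (\<integral>\<omega>. f \<omega> \<partial>distr (Omega D \<Otimes>\<^sub>M Omega D) (Omega D) (\<lambda>p. mixw t (fst p) (snd p)))"
    by (simp add: mix_distr[OF D])
  also have "\<dots> = (\<integral>p. f (mixw t (fst p) (snd p)) \<partial>(Omega D \<Otimes>\<^sub>M Omega D))"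
    using f mix_meas[OF D, of t] by (intro integral_distr) auto
  also have "\<dots> = (\<integral>\<omega>1. \<integral>\<omega>2. f (mixw t \<omega>1 \<omega>2) \<partial>Omega D \<partial>Omega D)"
    using ps.integral_fst'[OF i2] by simp
  finally show ?thesis .
qed

lemma blk_meas: "blk d t k \<in> measurable (Omega D) (PiM {..<d} (\<lambda>_. D))"
  unfolding blk_def Omega_def
  by (intro measurable_restrict measurable_component_singleton) auto

lemma blk_distr: "distr (Omega D) (PiM {..<d} (\<lambda>_. D)) (blk d t k) = PiM {..<d} (\<lambda>_. D)"
  using distr_PiM_reindex[of UNIV "\<lambda>_. D" "\<lambda>j. (t, k, j)" "{..<d}"]
  unfolding Omega_def blk_def by (auto simp: inj_on_def prob_space_axioms)

lemma coords_indep: "O.indep_vars (\<lambda>_. D) (\<lambda>x \<omega>. \<omega> x) UNIV"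
proof (subst O.indep_vars_iff_distr_eq_PiM)
  show "(\<lambda>\<omega>. \<omega> x) \<in> measurable (Omega D) D" for x
    unfolding Omega_def by (rule measurable_component_singleton) auto
  have "(\<Pi>\<^sub>M i\<in>UNIV. distr (Omega D) D (\<lambda>\<omega>. \<omega> i)) = Omega D"
    unfolding Omega_def by (subst PO.PiM_component) auto
  moreover have "distr (Omega D) (\<Pi>\<^sub>M i\<in>UNIV. D) (\<lambda>x. \<lambda>i\<in>UNIV. x i) = Omega D"
  proof -
    have "(\<lambda>x::omega. \<lambda>i\<in>UNIV. x i) = (\<lambda>x. x)" by (auto simp: fun_eq_iff)
    then show ?thesis unfolding Omega_def by (simp add: distr_id)
  qed
  ultimately show "distr (Omega D) (\<Pi>\<^sub>M i\<in>UNIV. D) (\<lambda>x. \<lambda>i\<in>UNIV. x i) = (\<Pi>\<^sub>M i\<in>UNIV. distr (Omega D) D (\<lambda>\<omega>. \<omega> i))"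
    by simp
qed simp

lemma blk_indep: "O.indep_vars (\<lambda>_. PiM {..<d} (\<lambda>_. D)) (\<lambda>k. blk d t k) UNIV"
proof -
  define K where "K (k::nat) = (\<lambda>j. (t, k, j)) ` {..<d}" for k
  have "O.indep_vars (\<lambda>k. PiM (K k) (\<lambda>_. D)) (\<lambda>k \<omega>. restrict (\<lambda>x. \<omega> x) (K k)) UNIV"
    by (rule O.indep_vars_restrict[OF coords_indep]) (auto simp: K_def disjoint_family_on_def)
  then have "O.indep_vars (\<lambda>_. PiM {..<d} (\<lambda>_. D)) (\<lambda>k \<omega>. (\<lambda>f. \<lambda>j\<in>{..<d}. f (t, k, j)) (restrict (\<lambda>x. \<omega> x) (K k))) UNIV"
    by (rule O.indep_vars_compose2) (intro measurable_restrict measurable_component_singleton, auto simp: K_def)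
  then show ?thesis
    by (rule O.indep_vars_cong[THEN iffD1, rotated -1]) (auto simp: blk_def K_def fun_eq_iff)
qed

end


definition Aev :: "nat \<Rightarrow> nat \<Rightarrow> nat \<Rightarrow> nat \<Rightarrow> (nat \<Rightarrow> real) \<Rightarrow> nat \<Rightarrow> omega set" where
  "Aev d m t k lam i = {\<omega>. i \<in> topm d m (\<lambda>j. \<omega> (t, k, j) - lam j)}"

context
  fixes D :: "real measure"
  assumes D: "real_distribution D"
begin

interpretation real_distribution D by (rule D)
interpretation O: prob_space "Omega D" by (rule Omega_prob[OF D])
interpretation PD: product_prob_space "\<lambda>_::nat. D" "{..<d}" for d by unfold_locales

lemma R_comp: "j < d \<Longrightarrow> (\<lambda>r. r j) \<in> borel_measurable (PiM {..<d} (\<lambda>_::nat. D))"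
proof -
  assume "j < d"
  then have "(\<lambda>r. r j) \<in> measurable (PiM {..<d} (\<lambda>_::nat. D)) D" by (intro measurable_component_singleton) auto
  then show ?thesis using measurable_cong_sets[OF refl events_eq_borel] by blast
qed

lemma S_sets: "{r \<in> space (PiM {..<d} (\<lambda>_. D)). i \<in> topm d m (\<lambda>j. r j - lam j)} \<in> sets (PiM {..<d} (\<lambda>_. D))"
proof -
  have [measurable]: "(\<lambda>r. r j - lam j) \<in> borel_measurable (PiM {..<d} (\<lambda>_::nat. D))" if "j < d" for j
    using that R_comp[OF that] by (intro borel_measurable_diff) auto
  show ?thesis by measurable
qed

lemma Aev_sets: "Aev d m t k lam i \<in> sets (Omega D)"
proof -
  note coord_meas[OF D, measurable]
  have [measurable]: "(\<lambda>\<omega>. \<omega> (t, k, j) - lam j) \<in> borel_measurable (Omega D)" for j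
    by measurable
  have "Aev d m t k lam i = {\<omega> \<in> space (Omega D). i \<in> topm d m (\<lambda>j. \<omega> (t, k, j) - lam j)}"
    by (simp add: Aev_def space_Omega[OF D])
  also have "\<dots> \<in> sets (Omega D)" by measurable
  finally show ?thesis .
qed

lemma Aev_eq: "Aev d m t k lam i = blk d t k -` {r \<in> space (PiM {..<d} (\<lambda>_. D)). i \<in> topm d m (\<lambda>j. r j - lam j)} \<inter> space (Omega D)"
proof -
  have "topm d m (\<lambda>j. blk d t k \<omega> j - lam j) = topm d m (\<lambda>j. \<omega> (t, k, j) - lam j)" for \<omega>
    by (rule topm_cong) (simp add: blk_def)
  moreover have "blk d t k \<omega> \<in> space (PiM {..<d} (\<lambda>_. D))" for \<omega>
    by (simp add: blk_def space_PiM)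
  ultimately show ?thesis by (auto simp: Aev_def space_Omega[OF D])
qed

lemma prob_Aev: "O.prob (Aev d m t k lam i) = phi d m D lam i"
proof -
  have "O.prob (Aev d m t k lam i) = measure (distr (Omega D) (PiM {..<d} (\<lambda>_. D)) (blk d t k)) {r \<in> space (PiM {..<d} (\<lambda>_. D)). i \<in> topm d m (\<lambda>j. r j - lam j)}"
    unfolding Aev_eq by (rule measure_distr[symmetric, OF blk_meas[OF D] S_sets])
  then show ?thesis unfolding blk_distr[OF D] phi_def .
qed

lemma prob_indep:
  assumes J: "finite J" "J \<noteq> {}"
  shows "O.prob (\<Inter>k\<in>J. (if k \<in> Z then Aev d m t k lam i else UNIV - Aev d m t k lam i))
     = (\<Prod>k\<in>J. if k \<in> Z then phi d m D lam i else 1 - phi d m D lam i)"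
proof -
  let ?R = "PiM {..<d} (\<lambda>_::nat. D)"
  let ?S = "{r \<in> space ?R. i \<in> topm d m (\<lambda>j. r j - lam j)}"
  define F where "F k = (if k \<in> Z then ?S else space ?R - ?S)" for k
  have sp: "blk d t k \<omega> \<in> space ?R" for k \<omega> by (simp add: blk_def space_PiM)
  have pre: "blk d t k -` F k \<inter> space (Omega D) = (if k \<in> Z then Aev d m t k lam i else UNIV - Aev d m t k lam i)" for k
    unfolding Aev_eq F_def using sp by (auto simp: space_Omega[OF D])
  have "O.prob (\<Inter>k\<in>J. blk d t k -` F k \<inter> space (Omega D)) = (\<Prod>k\<in>J. O.prob (blk d t k -` F k \<inter> space (Omega D)))"
    by (rule O.indep_varsD[OF blk_indep[OF D]]) (use J S_sets in \<open>auto simp: F_def\<close>)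
  also have "\<dots> = (\<Prod>k\<in>J. if k \<in> Z then phi d m D lam i else 1 - phi d m D lam i)"
  proof (rule prod.cong)
    fix k assume "k \<in> J"
    show "O.prob (blk d t k -` F k \<inter> space (Omega D)) = (if k \<in> Z then phi d m D lam i else 1 - phi d m D lam i)"
    proof (cases "k \<in> Z")
      case True then show ?thesis unfolding pre using prob_Aev by simp
    next
      case False
      have "O.prob (UNIV - Aev d m t k lam i) = 1 - phi d m D lam i"
        using O.prob_compl[OF Aev_sets] prob_Aev by (simp add: space_Omega[OF D])
      with False show ?thesis unfolding pre by simp
    qed
  qed simp
  finally show ?thesis unfolding pre .
qed

end


context
  fixes D :: "real measure"
  assumes D: "real_distribution D"
begin

interpretation real_distribution D by (rule D)
interpretation O: prob_space "Omega D" by (rule Omega_prob[OF D])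

lemma geo:
  fixes c :: real and d m t i :: nat and lam :: "nat \<Rightarrow> real"
  defines "A \<equiv> \<lambda>k. Aev d m t k lam i"
  defines "p \<equiv> phi d m D lam i"
  assumes p: "0 < p" and c: "0 \<le> c"
  shows "(\<integral>\<^sup>+\<omega>. ennreal (if \<omega> \<in> A 0 then c * real (if \<exists>k\<ge>1. \<omega> \<in> A k then LEAST k. k \<ge> 1 \<and> \<omega> \<in> A k else 0) else 0) \<partial>Omega D) = ennreal c"
proof -
  note coord_meas[OF D, measurable] Aev_sets[OF D, measurable, simp]
  have p1: "p \<le> 1" unfolding p_def using prob_Aev[OF D, of d m t 0 lam i, symmetric] by simp
  define B where "B n = A 0 \<inter> (\<Inter>k\<in>{1..n}. UNIV - A k)" for n
  have Bs[measurable]: "B n \<in> sets (Omega D)" for n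
  proof -
    have "B n = A 0 - (\<Union>k\<in>{1..n}. A k)" unfolding B_def by auto
    also have "\<dots> \<in> sets (Omega D)" unfolding A_def by (intro sets.Diff sets.finite_UN) auto
    finally show ?thesis .
  qed
  have probB: "O.prob (B n) = p * (1 - p) ^ n" for n
  proof -
    have "B n = (\<Inter>k\<in>{0..n}. (if k \<in> {0} then Aev d m t k lam i else UNIV - Aev d m t k lam i))"
      unfolding B_def A_def by (auto simp: atLeast0AtMost)
    moreover have "(\<Prod>k\<in>{0..n}. if k \<in> {0} then p else 1 - p) = p * (1 - p) ^ n"
    proof -
      have "{0..n} = insert 0 {1..n}" by auto
      moreover have "{Suc 0..n} \<inter> - {0} = {Suc 0..n}" by auto
      ultimately show ?thesis by (simp add: prod.If_cases)
    qed
    ultimately show ?thesis using prob_indep[OF D, of "{0..n}" "{0}" d m t lam i] unfolding p_def by simp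
  qed
  define N where "N = {\<omega>. \<forall>k\<ge>1. \<omega> \<notin> A k}"
  have Nnull: "N \<in> null_sets (Omega D)"
  proof -
    have Ns: "N \<in> sets (Omega D)"
    proof -
      have "N = (\<Inter>k\<in>{1..}. UNIV - A k)" unfolding N_def by auto
      also have "\<dots> \<in> sets (Omega D)" unfolding A_def
        by (intro sets.countable_INT') (auto intro!: sets.Diff simp del: space_Omega[OF D] simp: space_Omega[OF D, symmetric])
      finally show ?thesis .
    qed
    have le: "O.prob N \<le> (1 - p) ^ n" if "n \<ge> 1" for n
    proof -
      have "N \<subseteq> (\<Inter>k\<in>{1..n}. (if k \<in> {} then Aev d m t k lam i else UNIV - Aev d m t k lam i))"
        unfolding N_def A_def by auto
      then have "O.prob N \<le> O.prob (\<Inter>k\<in>{1..n}. (if k \<in> {} then Aev d m t k lam i else UNIV - Aev d m t k lam i))"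
        by (intro O.finite_measure_mono) (auto intro!: sets.finite_INT sets.Diff simp del: space_Omega[OF D] simp: space_Omega[OF D, symmetric] that)
      also have "\<dots> = (1 - p) ^ n"
        using prob_indep[OF D, of "{1..n}" "{}" d m t lam i] that unfolding p_def by simp
      finally show ?thesis .
    qed
    have "(\<lambda>n. (1 - p) ^ n) \<longlonglongrightarrow> 0" using p p1 by (intro LIMSEQ_power_zero) auto
    then have "O.prob N \<le> 0" by (rule LIMSEQ_le_const) (use le in auto)
    then have "emeasure (Omega D) N = 0" using O.emeasure_eq_measure measure_nonneg[of "Omega D" N] by simp
    then show ?thesis using Ns by auto
  qed
  have ae: "AE \<omega> in Omega D. ennreal (if \<omega> \<in> A 0 then c * real (if \<exists>k\<ge>1. \<omega> \<in> A k then LEAST k. k \<ge> 1 \<and> \<omega> \<in> A k else 0) else 0)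
      = ennreal c * (\<Sum>n. indicator (B n) \<omega>)"
  proof (rule AE_mp[OF AE_not_in[OF Nnull]], rule AE_I2, rule impI)
    fix \<omega> assume "\<omega> \<notin> N"
    then have ex: "\<exists>k\<ge>1. \<omega> \<in> A k" unfolding N_def by auto
    define K where "K = (LEAST k. k \<ge> 1 \<and> \<omega> \<in> A k)"
    have K1: "K \<ge> 1 \<and> \<omega> \<in> A K" unfolding K_def using ex by (metis (mono_tags, lifting) LeastI)
    have Kmin: "k < K \<Longrightarrow> \<not> (k \<ge> 1 \<and> \<omega> \<in> A k)" for k unfolding K_def by (rule not_less_Least)
    show "ennreal (if \<omega> \<in> A 0 then c * real (if \<exists>k\<ge>1. \<omega> \<in> A k then LEAST k. k \<ge> 1 \<and> \<omega> \<in> A k else 0) else 0)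
      = ennreal c * (\<Sum>n. indicator (B n) \<omega>)"
    proof (cases "\<omega> \<in> A 0")
      case False
      then have "\<omega> \<notin> B n" for n unfolding B_def by auto
      then show ?thesis using False by (simp add: indicator_def)
    next
      case True
      have "\<omega> \<in> B n \<longleftrightarrow> n < K" for n
      proof
        assume "\<omega> \<in> B n"
        then have "\<forall>k\<in>{1..n}. \<omega> \<notin> A k" unfolding B_def by auto
        then show "n < K" using K1 by (metis atLeastAtMost_iff not_less)
      next
        assume "n < K"
        then show "\<omega> \<in> B n" unfolding B_def using True Kmin by auto
      qed
      then have ind: "(indicator (B n) \<omega> :: ennreal) = (if n < K then 1 else 0)" for n
        by (simp add: indicator_def)
      have "(\<Sum>n. indicator (B n) \<omega> :: ennreal) = (\<Sum>n<K. 1)"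
        unfolding ind by (subst suminf_finite[of "{..<K}"]) auto
      then have "(\<Sum>n. indicator (B n) \<omega> :: ennreal) = of_nat K" by simp
      then show ?thesis using True ex c unfolding K_def
        by (simp add: ennreal_mult ennreal_of_nat_eq_real_of_nat)
    qed
  qed
  have "(\<integral>\<^sup>+\<omega>. ennreal (if \<omega> \<in> A 0 then c * real (if \<exists>k\<ge>1. \<omega> \<in> A k then LEAST k. k \<ge> 1 \<and> \<omega> \<in> A k else 0) else 0) \<partial>Omega D)
     = (\<integral>\<^sup>+\<omega>. ennreal c * (\<Sum>n. indicator (B n) \<omega>) \<partial>Omega D)"
    by (rule nn_integral_cong_AE[OF ae])
  also have "\<dots> = ennreal c * (\<integral>\<^sup>+\<omega>. (\<Sum>n. indicator (B n) \<omega>) \<partial>Omega D)"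
    by (rule nn_integral_cmult) measurable
  also have "(\<integral>\<^sup>+\<omega>. (\<Sum>n. indicator (B n) \<omega>) \<partial>Omega D) = (\<Sum>n. emeasure (Omega D) (B n))"
    by (subst nn_integral_suminf) auto
  also have "\<dots> = (\<Sum>n. ennreal (p * (1 - p) ^ n))"
    using probB by (simp add: O.emeasure_eq_measure)
  also have "\<dots> = ennreal (\<Sum>n. p * (1 - p) ^ n)"
    using p p1 by (intro suminf_ennreal2) (auto intro!: summable_mult summable_geometric)
  also have "(\<Sum>n. p * (1 - p) ^ n) = 1"
    using p p1 by (subst suminf_mult) (auto intro!: summable_geometric simp: suminf_geometric)
  finally show ?thesis by simp
qed

end


lemma est_Aev: "est d m \<eta> L lt \<omega> t i =
  (if \<omega> \<in> Aev d m t 0 (\<lambda>j. \<eta> * L j) i then lt i * real (if \<exists>k\<ge>1. \<omega> \<in> Aev d m t k (\<lambda>j. \<eta> * L j) i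
     then LEAST k. k \<ge> 1 \<and> \<omega> \<in> Aev d m t k (\<lambda>j. \<eta> * L j) i else 0) else 0)"
  unfolding est_def Kcount_def play_def pert_def Aev_def mem_Collect_eq by (rule refl)

lemma est_local: "(\<And>k j. \<omega> (t, k, j) = \<omega>' (t, k, j)) \<Longrightarrow> est d m \<eta> L lt \<omega> t i = est d m \<eta> L lt \<omega>' t i"
proof -
  assume "\<And>k j. \<omega> (t, k, j) = \<omega>' (t, k, j)"
  then have e: "pert \<omega> t = pert \<omega>' t" by (auto simp: pert_def fun_eq_iff)
  show ?thesis unfolding est_def Kcount_def by (simp only: e)
qed

lemma est_nonneg: "(\<And>j. j < d \<Longrightarrow> 0 \<le> lt j) \<Longrightarrow> 0 \<le> est d m \<eta> L lt \<omega> t i"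
  unfolding est_def play_def using topm_sub by fastforce

lemma Lhat_local:
  assumes adv: "admissible_adv d D ell"
  shows "(\<And>s k j. s < t \<Longrightarrow> \<omega> (s, k, j) = \<omega>' (s, k, j)) \<Longrightarrow> Lhat d m \<eta> ell t \<omega> = Lhat d m \<eta> ell t \<omega>'"
proof (induction t)
  case 0 then show ?case by simp
next
  case (Suc t)
  have L: "Lhat d m \<eta> ell t \<omega> = Lhat d m \<eta> ell t \<omega>'" using Suc by auto
  have "\<forall>s k i. s < t \<longrightarrow> \<omega> (s, k, i) = \<omega>' (s, k, i)" using Suc.prems by auto
  then have E: "ell t \<omega> = ell t \<omega>'" using adv unfolding admissible_adv_def by blast
  show ?case using est_local[of \<omega> t \<omega>'] Suc.prems by (simp add: L E fun_eq_iff)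
qed

lemma Lhat_sum: "Lhat d m \<eta> ell T \<omega> i = (\<Sum>t<T. lhat d m \<eta> ell t \<omega> i)"
  by (induction T) (simp_all add: lhat_def)

lemma lhat_nonneg:
  assumes adv: "admissible_adv d D ell"
  shows "0 \<le> lhat d m \<eta> ell t \<omega> i"
  unfolding lhat_def by (rule est_nonneg) (use adv in \<open>auto simp: admissible_adv_def\<close>)

lemma Lhat_nonneg:
  assumes adv: "admissible_adv d D ell"
  shows "0 \<le> Lhat d m \<eta> ell t \<omega> i"
  unfolding Lhat_sum using lhat_nonneg[OF adv] by (simp add: sum_nonneg)

context
  fixes D :: "real measure"
  assumes D: "real_distribution D"
begin

interpretation real_distribution D by (rule D)
interpretation O: prob_space "Omega D" by (rule Omega_prob[OF D])

lemma est_meas: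
  assumes L: "\<And>j. (\<lambda>\<omega>. L \<omega> j) \<in> borel_measurable (Omega D)"
    and lt: "(\<lambda>\<omega>. lt \<omega> i) \<in> borel_measurable (Omega D)"
  shows "(\<lambda>\<omega>. est d m \<eta> (L \<omega>) (lt \<omega>) \<omega> t i) \<in> borel_measurable (Omega D)"
proof -
  note [measurable] = L lt coord_meas[OF D]
  have P[measurable]: "Measurable.pred (Omega D) (\<lambda>\<omega>. i \<in> topm d m (\<lambda>j. \<omega> (t, k, j) - \<eta> * L \<omega> j))" for k
    by measurable
  have K: "(\<lambda>\<omega>. if \<exists>k. k \<ge> 1 \<and> i \<in> topm d m (\<lambda>j. \<omega> (t, k, j) - \<eta> * L \<omega> j)
      then LEAST k. k \<ge> 1 \<and> i \<in> topm d m (\<lambda>j. \<omega> (t, k, j) - \<eta> * L \<omega> j) else 0) \<in> measurable (Omega D) (count_space UNIV)"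
    by measurable
  have "(\<lambda>\<omega>. est d m \<eta> (L \<omega>) (lt \<omega>) \<omega> t i) = (\<lambda>\<omega>. if i \<in> topm d m (\<lambda>j. \<omega> (t, 0, j) - \<eta> * L \<omega> j)
     then lt \<omega> i * real (if \<exists>k. k \<ge> 1 \<and> i \<in> topm d m (\<lambda>j. \<omega> (t, k, j) - \<eta> * L \<omega> j)
      then LEAST k. k \<ge> 1 \<and> i \<in> topm d m (\<lambda>j. \<omega> (t, k, j) - \<eta> * L \<omega> j) else 0) else 0)"
    unfolding est_def Kcount_def play_def pert_def by (simp add: fun_eq_iff)
  also have "\<dots> \<in> borel_measurable (Omega D)"
  proof (intro measurable_If borel_measurable_times lt)
    show "(\<lambda>x. real (if \<exists>k. k \<ge> 1 \<and> i \<in> topm d m (\<lambda>j. x (t, k, j) - \<eta> * L x j)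
      then LEAST k. k \<ge> 1 \<and> i \<in> topm d m (\<lambda>j. x (t, k, j) - \<eta> * L x j) else 0)) \<in> borel_measurable (Omega D)"
      by (rule measurable_compose[OF K]) simp
    show "{x \<in> space (Omega D). i \<in> topm d m (\<lambda>j. x (t, 0, j) - \<eta> * L x j)} \<in> sets (Omega D)"
      using P[of 0] by (simp add: pred_def)
  qed simp
  finally show ?thesis .
qed

lemma Lhat_meas:
  assumes adv: "admissible_adv d D ell"
  shows "(\<lambda>\<omega>. Lhat d m \<eta> ell t \<omega> i) \<in> borel_measurable (Omega D)"
proof (induction t arbitrary: i)
  case 0 then show ?case by simp
next
  case (Suc t)
  have "(\<lambda>\<omega>. ell t \<omega> i) \<in> borel_measurable (Omega D)" for i
    using adv unfolding admissible_adv_def by blast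
  then have "(\<lambda>\<omega>. est d m \<eta> (Lhat d m \<eta> ell t \<omega>) (ell t \<omega>) \<omega> t i) \<in> borel_measurable (Omega D)"
    by (intro est_meas Suc.IH)
  then show ?case using Suc.IH by simp
qed

lemma lhat_meas:
  assumes adv: "admissible_adv d D ell"
  shows "(\<lambda>\<omega>. lhat d m \<eta> ell t \<omega> i) \<in> borel_measurable (Omega D)"
  unfolding lhat_def
  by (intro est_meas Lhat_meas[OF adv]) (use adv in \<open>auto simp: admissible_adv_def\<close>)

end


lemma mix_fst: "s \<noteq> t \<Longrightarrow> mixw t \<omega>1 \<omega>2 (s, k, j) = \<omega>1 (s, k, j)"
  and mix_snd: "mixw t \<omega>1 \<omega>2 (t, k, j) = \<omega>2 (t, k, j)"
  by (auto simp: mixw_def)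

context
  fixes D :: "real measure" and d m :: nat and \<eta> :: real and ell
  assumes D: "real_distribution D"
    and adv: "admissible_adv d D ell"
    and phipos: "\<And>lam i. i < d \<Longrightarrow> 0 < phi d m D lam i"
begin

interpretation real_distribution D by (rule D)
interpretation O: prob_space "Omega D" by (rule Omega_prob[OF D])

lemma ell_bnd: "i < d \<Longrightarrow> 0 \<le> ell t \<omega> i \<and> ell t \<omega> i \<le> 1"
  using adv unfolding admissible_adv_def by blast

lemma ell_meas: "(\<lambda>\<omega>. ell t \<omega> i) \<in> borel_measurable (Omega D)"
  using adv unfolding admissible_adv_def by blast

lemma Lhat_mix: "Lhat d m \<eta> ell t (mixw t \<omega>1 \<omega>2) = Lhat d m \<eta> ell t \<omega>1"
  by (rule Lhat_local[OF adv]) (simp add: mix_fst)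

lemma ell_mix: "ell t (mixw t \<omega>1 \<omega>2) = ell t \<omega>1"
  using adv mix_fst unfolding admissible_adv_def by (metis less_irrefl)

lemma lhat_mix: "lhat d m \<eta> ell t (mixw t \<omega>1 \<omega>2) i = est d m \<eta> (Lhat d m \<eta> ell t \<omega>1) (ell t \<omega>1) \<omega>2 t i"
  unfolding lhat_def Lhat_mix ell_mix by (rule est_local) (simp add: mix_snd)

lemma wprob_mix: "wprob d m \<eta> D ell t (mixw t \<omega>1 \<omega>2) i = wprob d m \<eta> D ell t \<omega>1 i"
  unfolding wprob_def Lhat_mix ..

lemma inner_est:
  assumes i: "i < d" and lt: "0 \<le> lt i" and w: "0 \<le> w"
  shows "(\<integral>\<^sup>+\<omega>. ennreal (est d m \<eta> L lt \<omega> t i * w) \<partial>Omega D) = ennreal (lt i * w)"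
proof -
  have "(\<lambda>\<omega>. ennreal (est d m \<eta> L lt \<omega> t i * w)) = (\<lambda>\<omega>. ennreal (if \<omega> \<in> Aev d m t 0 (\<lambda>j. \<eta> * L j) i then (lt i * w) * real (if \<exists>k\<ge>1. \<omega> \<in> Aev d m t k (\<lambda>j. \<eta> * L j) i
     then LEAST k. k \<ge> 1 \<and> \<omega> \<in> Aev d m t k (\<lambda>j. \<eta> * L j) i else 0) else 0))"
    unfolding est_Aev by (auto simp: fun_eq_iff mult_ac)
  then show ?thesis using geo[OF D, where c="lt i * w" and d=d and m=m and t=t and lam="\<lambda>j. \<eta> * L j" and i=i] phipos[OF i] lt w by simp
qed

lemma inner_ind:
  assumes c: "0 \<le> c"
  shows "(\<integral>\<^sup>+\<omega>. ennreal (if i \<in> play d m \<eta> L (pert \<omega> t 0) then c else 0) \<partial>Omega D) = ennreal (c * phi d m D (\<lambda>j. \<eta> * L j) i)"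
proof -
  have "(\<lambda>\<omega>. ennreal (if i \<in> play d m \<eta> L (pert \<omega> t 0) then c else 0)) = (\<lambda>\<omega>. ennreal c * indicator (Aev d m t 0 (\<lambda>j. \<eta> * L j) i) \<omega>)"
    by (auto simp: fun_eq_iff Aev_def play_def pert_def indicator_def)
  then have "(\<integral>\<^sup>+\<omega>. ennreal (if i \<in> play d m \<eta> L (pert \<omega> t 0) then c else 0) \<partial>Omega D) = ennreal c * emeasure (Omega D) (Aev d m t 0 (\<lambda>j. \<eta> * L j) i)"
    using Aev_sets[OF D] by (simp add: nn_integral_cmult_indicator)
  also have "\<dots> = ennreal (c * phi d m D (\<lambda>j. \<eta> * L j) i)"
  proof -
    have "0 \<le> phi d m D (\<lambda>j. \<eta> * L j) i" by (simp add: phi_def)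
    then show ?thesis using prob_Aev[OF D] c by (simp add: O.emeasure_eq_measure ennreal_mult)
  qed
  finally show ?thesis .
qed

lemma wprob_meas: "(\<lambda>\<omega>. wprob d m \<eta> D ell t \<omega> i) \<in> borel_measurable (Omega D)"
proof -
  let ?R = "PiM {..<d} (\<lambda>_::nat. D)"
  interpret R: prob_space ?R by (intro prob_space_PiM prob_space_axioms)
  define Q where "Q = {p \<in> space (Omega D \<Otimes>\<^sub>M ?R). i \<in> topm d m (\<lambda>j. snd p j - \<eta> * Lhat d m \<eta> ell t (fst p) j)}"
  have fj: "(\<lambda>p. snd p j - \<eta> * Lhat d m \<eta> ell t (fst p) j) \<in> borel_measurable (Omega D \<Otimes>\<^sub>M ?R)" if "j < d" for j
  proof -
    have "(\<lambda>p. snd p j) \<in> borel_measurable (Omega D \<Otimes>\<^sub>M ?R)"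
      using measurable_compose[OF measurable_snd R_comp[OF D that]] .
    moreover have "(\<lambda>p. Lhat d m \<eta> ell t (fst p) j) \<in> borel_measurable (Omega D \<Otimes>\<^sub>M ?R)"
      using measurable_compose[OF measurable_fst Lhat_meas[OF D adv]] .
    ultimately show ?thesis by measurable
  qed
  have Qs: "Q \<in> sets (Omega D \<Otimes>\<^sub>M ?R)"
    unfolding Q_def using pred_topm[of d "\<lambda>j p. snd p j - \<eta> * Lhat d m \<eta> ell t (fst p) j", OF fj] by (simp add: pred_def)
  have "(\<lambda>\<omega>. \<integral>\<^sup>+ r. indicator Q (\<omega>, r) \<partial>?R) \<in> borel_measurable (Omega D)"
    by (rule R.borel_measurable_nn_integral_fst) (use Qs in simp)
  then have m: "(\<lambda>\<omega>. enn2real (\<integral>\<^sup>+ r. indicator Q (\<omega>, r) \<partial>?R)) \<in> borel_measurable (Omega D)"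
    by measurable
  have "(\<integral>\<^sup>+ r. indicator Q (\<omega>, r) \<partial>?R) = emeasure ?R {r \<in> space ?R. i \<in> topm d m (\<lambda>j. r j - \<eta> * Lhat d m \<eta> ell t \<omega> j)}" for \<omega>
  proof -
    have s: "{r \<in> space ?R. i \<in> topm d m (\<lambda>j. r j - \<eta> * Lhat d m \<eta> ell t \<omega> j)} \<in> sets ?R"
      by (rule S_sets[OF D])
    have "(\<lambda>r. indicator Q (\<omega>, r) :: ennreal) = indicator {r \<in> space ?R. i \<in> topm d m (\<lambda>j. r j - \<eta> * Lhat d m \<eta> ell t \<omega> j)}"
      by (auto simp: Q_def indicator_def fun_eq_iff space_pair_measure space_Omega[OF D])
    then show ?thesis using s by simp
  qed
  then have "(\<lambda>\<omega>. wprob d m \<eta> D ell t \<omega> i) = (\<lambda>\<omega>. enn2real (\<integral>\<^sup>+ r. indicator Q (\<omega>, r) \<partial>?R))"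
    by (simp add: wprob_def phi_def measure_def)
  then show ?thesis using m by simp
qed

lemma wprob_bnd: "0 \<le> wprob d m \<eta> D ell t \<omega> i \<and> wprob d m \<eta> D ell t \<omega> i \<le> 1"
proof -
  interpret R: prob_space "PiM {..<d} (\<lambda>_::nat. D)" by (intro prob_space_PiM prob_space_axioms)
  show ?thesis unfolding wprob_def phi_def by simp
qed

end


context
  fixes D :: "real measure" and d m :: nat and \<eta> :: real and ell
  assumes D: "real_distribution D"
    and adv: "admissible_adv d D ell"
    and phipos: "\<And>lam i. i < d \<Longrightarrow> 0 < phi d m D lam i"
begin

interpretation real_distribution D by (rule D)
interpretation O: prob_space "Omega D" by (rule Omega_prob[OF D])

lemma act_pred: "Measurable.pred (Omega D) (\<lambda>\<omega>. i \<in> action d m \<eta> ell t \<omega>)"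
proof -
  note coord_meas[OF D, measurable] Lhat_meas[OF D adv, measurable]
  have "Measurable.pred (Omega D) (\<lambda>\<omega>. i \<in> topm d m (\<lambda>j. \<omega> (t, 0, j) - \<eta> * Lhat d m \<eta> ell t \<omega> j))"
    by measurable
  then show ?thesis unfolding action_def play_def pert_def .
qed

lemma nn_ell_fin: "(\<integral>\<^sup>+\<omega>. ennreal (ell t \<omega> i * w \<omega>) \<partial>Omega D) < \<infinity>" if "i < d" "\<And>\<omega>. 0 \<le> w \<omega> \<and> w \<omega> \<le> 1"
proof -
  have "(\<integral>\<^sup>+\<omega>. ennreal (ell t \<omega> i * w \<omega>) \<partial>Omega D) \<le> (\<integral>\<^sup>+\<omega>. 1 \<partial>Omega D)"
    using ell_bnd[OF D adv phipos that(1)] that(2) by (intro nn_integral_mono) (auto intro!: mult_le_one)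
  also have "\<dots> = 1" by (simp add: O.emeasure_space_1)
  finally show ?thesis by (simp add: le_less_trans)
qed

lemma nn_lhat_w:
  assumes i: "i < d" and w: "\<And>\<omega>1 \<omega>2. w (mixw t \<omega>1 \<omega>2) = w \<omega>1" "\<And>\<omega>. 0 \<le> w \<omega>"
    and wm: "w \<in> borel_measurable (Omega D)"
  shows "(\<integral>\<^sup>+\<omega>. ennreal (lhat d m \<eta> ell t \<omega> i * w \<omega>) \<partial>Omega D) = (\<integral>\<^sup>+\<omega>. ennreal (ell t \<omega> i * w \<omega>) \<partial>Omega D)"
proof -
  have "(\<lambda>\<omega>. ennreal (lhat d m \<eta> ell t \<omega> i * w \<omega>)) \<in> borel_measurable (Omega D)"
    using lhat_meas[OF D adv] wm by measurable
  then have "(\<integral>\<^sup>+\<omega>. ennreal (lhat d m \<eta> ell t \<omega> i * w \<omega>) \<partial>Omega D)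
     = (\<integral>\<^sup>+\<omega>1. \<integral>\<^sup>+\<omega>2. ennreal (lhat d m \<eta> ell t (mixw t \<omega>1 \<omega>2) i * w (mixw t \<omega>1 \<omega>2)) \<partial>Omega D \<partial>Omega D)"
    by (rule nn_mix[OF D])
  also have "\<dots> = (\<integral>\<^sup>+\<omega>1. \<integral>\<^sup>+\<omega>2. ennreal (est d m \<eta> (Lhat d m \<eta> ell t \<omega>1) (ell t \<omega>1) \<omega>2 t i * w \<omega>1) \<partial>Omega D \<partial>Omega D)"
    by (simp add: lhat_mix[OF D adv phipos] w(1))
  also have "\<dots> = (\<integral>\<^sup>+\<omega>1. ennreal (ell t \<omega>1 i * w \<omega>1) \<partial>Omega D)"
    by (intro nn_integral_cong inner_est[OF D adv phipos i]) (use ell_bnd[OF D adv phipos i] w(2) in auto)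
  finally show ?thesis .
qed

lemma E1:
  assumes i: "i < d"
  shows "integrable (Omega D) (\<lambda>\<omega>. lhat d m \<eta> ell t \<omega> i)"
    and "(\<integral>\<omega>. lhat d m \<eta> ell t \<omega> i \<partial>Omega D) = (\<integral>\<omega>. ell t \<omega> i \<partial>Omega D)"
proof -
  have nn: "(\<integral>\<^sup>+\<omega>. ennreal (lhat d m \<eta> ell t \<omega> i) \<partial>Omega D) = (\<integral>\<^sup>+\<omega>. ennreal (ell t \<omega> i) \<partial>Omega D)"
    using nn_lhat_w[OF i, of "\<lambda>_. 1"] by simp
  have fin: "(\<integral>\<^sup>+\<omega>. ennreal (ell t \<omega> i) \<partial>Omega D) < \<infinity>"
    using nn_ell_fin[OF i, of "\<lambda>_. 1"] by simp
  show "integrable (Omega D) (\<lambda>\<omega>. lhat d m \<eta> ell t \<omega> i)"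
    by (rule integrableI_nonneg) (use lhat_meas[OF D adv] lhat_nonneg[OF adv] nn fin in auto)
  have "(\<integral>\<omega>. lhat d m \<eta> ell t \<omega> i \<partial>Omega D) = enn2real (\<integral>\<^sup>+\<omega>. ennreal (lhat d m \<eta> ell t \<omega> i) \<partial>Omega D)"
    by (rule integral_eq_nn_integral) (use lhat_meas[OF D adv] lhat_nonneg[OF adv] in auto)
  also have "\<dots> = (\<integral>\<omega>. ell t \<omega> i \<partial>Omega D)"
    unfolding nn by (rule integral_eq_nn_integral[symmetric]) (use ell_meas[OF D adv phipos] ell_bnd[OF D adv phipos i] in auto)
  finally show "(\<integral>\<omega>. lhat d m \<eta> ell t \<omega> i \<partial>Omega D) = (\<integral>\<omega>. ell t \<omega> i \<partial>Omega D)" .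
qed

lemma E2:
  assumes i: "i < d"
  shows "integrable (Omega D) (\<lambda>\<omega>. lhat d m \<eta> ell t \<omega> i * wprob d m \<eta> D ell t \<omega> i)"
    and "integrable (Omega D) (\<lambda>\<omega>. if i \<in> action d m \<eta> ell t \<omega> then ell t \<omega> i else 0)"
    and "(\<integral>\<omega>. (if i \<in> action d m \<eta> ell t \<omega> then ell t \<omega> i else 0) \<partial>Omega D)
       = (\<integral>\<omega>. lhat d m \<eta> ell t \<omega> i * wprob d m \<eta> D ell t \<omega> i \<partial>Omega D)"
proof -
  let ?w = "\<lambda>\<omega>. wprob d m \<eta> D ell t \<omega> i"
  note wm = wprob_meas[OF D adv phipos, where \<eta>=\<eta> and t=t and i=i]
  note wb = wprob_bnd[OF D adv phipos, where \<eta>=\<eta> and t=t]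
  have nn1: "(\<integral>\<^sup>+\<omega>. ennreal (lhat d m \<eta> ell t \<omega> i * ?w \<omega>) \<partial>Omega D) = (\<integral>\<^sup>+\<omega>. ennreal (ell t \<omega> i * ?w \<omega>) \<partial>Omega D)"
    by (rule nn_lhat_w[OF i]) (use wprob_mix[OF D adv phipos] wm wb in auto)
  have fin: "(\<integral>\<^sup>+\<omega>. ennreal (ell t \<omega> i * ?w \<omega>) \<partial>Omega D) < \<infinity>"
    by (rule nn_ell_fin[OF i]) (use wb in auto)
  have m1: "(\<lambda>\<omega>. lhat d m \<eta> ell t \<omega> i * ?w \<omega>) \<in> borel_measurable (Omega D)"
    using lhat_meas[OF D adv] wm by measurable
  have nn1': "0 \<le> lhat d m \<eta> ell t \<omega> i * ?w \<omega>" for \<omega>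
    using lhat_nonneg[OF adv] wb by simp
  show "integrable (Omega D) (\<lambda>\<omega>. lhat d m \<eta> ell t \<omega> i * ?w \<omega>)"
    by (rule integrableI_nonneg) (use m1 nn1' nn1 fin in auto)
  have m2: "(\<lambda>\<omega>. if i \<in> action d m \<eta> ell t \<omega> then ell t \<omega> i else 0) \<in> borel_measurable (Omega D)"
    using act_pred ell_meas[OF D adv phipos] by measurable
  have nn2': "0 \<le> (if i \<in> action d m \<eta> ell t \<omega> then ell t \<omega> i else 0)" for \<omega>
    using ell_bnd[OF D adv phipos i] by simp
  have nn2: "(\<integral>\<^sup>+\<omega>. ennreal (if i \<in> action d m \<eta> ell t \<omega> then ell t \<omega> i else 0) \<partial>Omega D) = (\<integral>\<^sup>+\<omega>. ennreal (ell t \<omega> i * ?w \<omega>) \<partial>Omega D)"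
  proof -
    have "(\<integral>\<^sup>+\<omega>. ennreal (if i \<in> action d m \<eta> ell t \<omega> then ell t \<omega> i else 0) \<partial>Omega D)
      = (\<integral>\<^sup>+\<omega>1. \<integral>\<^sup>+\<omega>2. ennreal (if i \<in> action d m \<eta> ell t (mixw t \<omega>1 \<omega>2) then ell t (mixw t \<omega>1 \<omega>2) i else 0) \<partial>Omega D \<partial>Omega D)"
      by (rule nn_mix[OF D]) (use m2 in measurable)
    also have "\<dots> = (\<integral>\<^sup>+\<omega>1. \<integral>\<^sup>+\<omega>2. ennreal (if i \<in> play d m \<eta> (Lhat d m \<eta> ell t \<omega>1) (pert \<omega>2 t 0) then ell t \<omega>1 i else 0) \<partial>Omega D \<partial>Omega D)"
    proof -
      have "pert (mixw t \<omega>1 \<omega>2) t 0 = pert \<omega>2 t 0" for \<omega>1 \<omega>2 by (simp add: pert_def mix_snd fun_eq_iff)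
      moreover have "ell t (mixw t \<omega>1 \<omega>2) i = ell t \<omega>1 i" for \<omega>1 \<omega>2
        using ell_mix[OF D adv phipos, of t \<omega>1 \<omega>2] by simp
      ultimately show ?thesis by (simp add: action_def Lhat_mix[OF D adv phipos] cong: if_cong)
    qed
    also have "\<dots> = (\<integral>\<^sup>+\<omega>1. ennreal (ell t \<omega>1 i * ?w \<omega>1) \<partial>Omega D)"
      by (intro nn_integral_cong) (use ell_bnd[OF D adv phipos i] in \<open>simp add: inner_ind[OF D adv phipos] wprob_def\<close>)
    finally show ?thesis .
  qed
  show "integrable (Omega D) (\<lambda>\<omega>. if i \<in> action d m \<eta> ell t \<omega> then ell t \<omega> i else 0)"
    by (rule integrableI_nonneg) (use m2 nn2' nn2 fin in auto)
  have "(\<integral>\<omega>. (if i \<in> action d m \<eta> ell t \<omega> then ell t \<omega> i else 0) \<partial>Omega D)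
     = enn2real (\<integral>\<^sup>+\<omega>. ennreal (if i \<in> action d m \<eta> ell t \<omega> then ell t \<omega> i else 0) \<partial>Omega D)"
    by (rule integral_eq_nn_integral) (use m2 nn2' in auto)
  also have "\<dots> = enn2real (\<integral>\<^sup>+\<omega>. ennreal (lhat d m \<eta> ell t \<omega> i * ?w \<omega>) \<partial>Omega D)"
    unfolding nn1 nn2 ..
  also have "\<dots> = (\<integral>\<omega>. lhat d m \<eta> ell t \<omega> i * ?w \<omega> \<partial>Omega D)"
    by (rule integral_eq_nn_integral[symmetric]) (use m1 nn1' in auto)
  finally show "(\<integral>\<omega>. (if i \<in> action d m \<eta> ell t \<omega> then ell t \<omega> i else 0) \<partial>Omega D)
       = (\<integral>\<omega>. lhat d m \<eta> ell t \<omega> i * wprob d m \<eta> D ell t \<omega> i \<partial>Omega D)" .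
qed

end


lemma btl_int:
  fixes D :: "real measure" and \<alpha> c \<eta> :: real
  assumes D: "real_distribution D" and eta: "\<eta> > 0" and md: "m \<le> d" and A: "A \<in> actions d m"
    and AEpos: "AE x in D. 0 < x" and a: "\<alpha> > 1" and c: "c \<ge> 1"
    and tail: "\<And>x. x \<ge> 1 \<Longrightarrow> 1 - cdf D x \<le> x powr (-\<alpha>)"
  shows "(\<Sum>t<T. \<Sum>i<d. lhat d m \<eta> ell t \<omega> i * wprob d m \<eta> D ell (Suc t) \<omega> i)
     \<le> (\<Sum>i\<in>A. Lhat d m \<eta> ell T \<omega> i) + (real m * c + real d * (c powr (1 - \<alpha>) / (\<alpha> - 1))) / \<eta>"
proof -
  interpret real_distribution D by (rule D)
  let ?R = "PiM {..<d} (\<lambda>_::nat. D)"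
  interpret R: product_prob_space "\<lambda>_::nat. D" "{..<d}" by unfold_locales
  let ?L = "\<lambda>s j. Lhat d m \<eta> ell s \<omega> j"
  let ?l = "\<lambda>s j. lhat d m \<eta> ell s \<omega> j"
  define S where "S s i = {r \<in> space ?R. i \<in> topm d m (\<lambda>j. r j - \<eta> * ?L (Suc s) j)}" for s i
  have Ss: "S s i \<in> sets ?R" for s i unfolding S_def by (rule S_sets[OF D])
  define g where "g r = (\<Sum>s<T. \<Sum>i\<in>topm d m (\<lambda>j. r j - \<eta> * ?L (Suc s) j). ?l s i)" for r
  have g_eq: "g r = (\<Sum>s<T. \<Sum>i<d. ?l s i * indicator (S s i) r)" if "r \<in> space ?R" for r
  proof -
    have "(\<Sum>i\<in>topm d m (\<lambda>j. r j - \<eta> * ?L (Suc s) j). ?l s i) = (\<Sum>i<d. ?l s i * indicator (S s i) r)" for s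
    proof -
      have "(\<Sum>i<d. ?l s i * indicator (S s i) r) = (\<Sum>i\<in>{i\<in>{..<d}. i \<in> topm d m (\<lambda>j. r j - \<eta> * ?L (Suc s) j)}. ?l s i)"
        using that by (simp add: sum.inter_filter S_def indicator_def; intro sum.cong; auto)
      also have "{i\<in>{..<d}. i \<in> topm d m (\<lambda>j. r j - \<eta> * ?L (Suc s) j)} = topm d m (\<lambda>j. r j - \<eta> * ?L (Suc s) j)"
        using topm_sub by blast
      finally show ?thesis by simp
    qed
    then show ?thesis unfolding g_def by simp
  qed
  have int_ind: "integrable ?R (\<lambda>r. ?l s i * indicator (S s i) r)" for s i
    using Ss by (intro integrable_mult_right integrable_real_indicator) (auto simp: R.emeasure_eq_measure)
  have int_g: "integrable ?R (\<lambda>r. \<Sum>s<T. \<Sum>i<d. ?l s i * indicator (S s i) r)"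
    using int_ind by (intro Bochner_Integration.integrable_sum) auto
  have int_g_val: "(\<integral>r. (\<Sum>s<T. \<Sum>i<d. ?l s i * indicator (S s i) r) \<partial>?R)
      = (\<Sum>t<T. \<Sum>i<d. lhat d m \<eta> ell t \<omega> i * wprob d m \<eta> D ell (Suc t) \<omega> i)"
  proof -
    have "(\<integral>r. (\<Sum>s<T. \<Sum>i<d. ?l s i * indicator (S s i) r) \<partial>?R) = (\<Sum>s<T. \<integral>r. (\<Sum>i<d. ?l s i * indicator (S s i) r) \<partial>?R)"
      by (rule Bochner_Integration.integral_sum) (use int_ind in \<open>intro Bochner_Integration.integrable_sum\<close>)
    also have "\<dots> = (\<Sum>s<T. \<Sum>i<d. \<integral>r. ?l s i * indicator (S s i) r \<partial>?R)"
      by (intro sum.cong refl Bochner_Integration.integral_sum int_ind)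
    also have "\<dots> = (\<Sum>s<T. \<Sum>i<d. ?l s i * measure ?R (S s i))"
      by (intro sum.cong refl) (simp add: Ss R.emeasure_eq_measure)
    also have "\<dots> = (\<Sum>t<T. \<Sum>i<d. lhat d m \<eta> ell t \<omega> i * wprob d m \<eta> D ell (Suc t) \<omega> i)"
      by (simp add: S_def wprob_def phi_def)
    finally show ?thesis .
  qed
  define h where "h r = (real m * c + \<eta> * (\<Sum>i\<in>A. ?L T i)) + (\<Sum>i<d. max 0 (r i - c))" for r
  have comp: "distr ?R D (\<lambda>r. r i) = D" if "i < d" for i
    using that by (intro R.PiM_component) auto
  have compm: "(\<lambda>r. r i) \<in> measurable ?R D" if "i < d" for i
    using that by (intro measurable_component_singleton) auto
  have int_max: "integrable ?R (\<lambda>r. max 0 (r i - c))" and val_max: "(\<integral>r. max 0 (r i - c) \<partial>?R) \<le> c powr (1 - \<alpha>) / (\<alpha> - 1)"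
    if "i < d" for i
  proof -
    have bm: "(\<lambda>x. max 0 (x - c)) \<in> borel_measurable D" by measurable
    have "integrable (distr ?R D (\<lambda>r. r i)) (\<lambda>x. max 0 (x - c))"
      unfolding comp[OF that] by (rule tail_int(1)[OF D c a tail])
    then show "integrable ?R (\<lambda>r. max 0 (r i - c))"
      using integrable_distr_eq[OF compm[OF that] bm] by simp
    have "(\<integral>r. max 0 (r i - c) \<partial>?R) = (\<integral>x. max 0 (x - c) \<partial>distr ?R D (\<lambda>r. r i))"
      by (rule integral_distr[symmetric, OF compm[OF that] bm])
    also have "\<dots> \<le> c powr (1 - \<alpha>) / (\<alpha> - 1)"
      unfolding comp[OF that] by (rule tail_int(2)[OF D c a tail])
    finally show "(\<integral>r. max 0 (r i - c) \<partial>?R) \<le> c powr (1 - \<alpha>) / (\<alpha> - 1)" .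
  qed
  have int_h: "integrable ?R h"
    unfolding h_def using int_max by (intro Bochner_Integration.integrable_add Bochner_Integration.integrable_sum) auto
  have val_h: "(\<integral>r. h r \<partial>?R) \<le> real m * c + real d * (c powr (1 - \<alpha>) / (\<alpha> - 1)) + \<eta> * (\<Sum>i\<in>A. ?L T i)"
  proof -
    have i1: "integrable ?R (\<lambda>r. \<Sum>i<d. max 0 (r i - c))"
      using int_max by (intro Bochner_Integration.integrable_sum) auto
    have "(\<integral>r. h r \<partial>?R) = (real m * c + \<eta> * (\<Sum>i\<in>A. ?L T i)) + (\<integral>r. (\<Sum>i<d. max 0 (r i - c)) \<partial>?R)"
      unfolding h_def by (subst Bochner_Integration.integral_add) (use i1 in \<open>auto simp: R.P.prob_space\<close>)
    also have "(\<integral>r. (\<Sum>i<d. max 0 (r i - c)) \<partial>?R) = (\<Sum>i<d. (\<integral>r. max 0 (r i - c) \<partial>?R))"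
      by (rule Bochner_Integration.integral_sum) (use int_max in auto)
    also have "(\<Sum>i<d. (\<integral>r. max 0 (r i - c) \<partial>?R)) \<le> (\<Sum>i<d::nat. c powr (1 - \<alpha>) / (\<alpha> - 1))"
      by (intro sum_mono val_max) auto
    finally show ?thesis by simp
  qed
  have AEr: "AE r in ?R. \<forall>j\<in>{..<d}. 0 < r j"
    by (rule eventually_ball_finite) (auto intro!: AE_PiM_component AEpos prob_space_axioms)
  have ptw: "AE r in ?R. \<eta> * (\<Sum>s<T. \<Sum>i<d. ?l s i * indicator (S s i) r) \<le> h r"
  proof (rule AE_mp[OF AEr], rule AE_I2, rule impI)
    fix r assume r: "r \<in> space ?R" and pos: "\<forall>j\<in>{..<d}. 0 < r j"
    have b: "\<eta> * g r \<le> (\<Sum>i\<in>topm d m (\<lambda>j. r j - \<eta> * ?L 0 j). (r i - \<eta> * ?L 0 i)) - (\<Sum>i\<in>A. (r i - \<eta> * ?L T i))"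
      unfolding g_def by (rule btl[OF md A]) (simp add: lhat_def)
    have b1: "(\<Sum>i\<in>topm d m (\<lambda>j. r j - \<eta> * ?L 0 j). (r i - \<eta> * ?L 0 i)) \<le> real m * c + (\<Sum>i<d. max 0 (r i - c))"
      using top_sum_bound[OF md, of "\<lambda>j. r j - \<eta> * ?L 0 j" r c] by simp
    have "(\<Sum>i\<in>A. r i) \<ge> 0"
      using A pos unfolding actions_def by (intro sum_nonneg) (auto simp: less_imp_le)
    then have b2: "- (\<Sum>i\<in>A. (r i - \<eta> * ?L T i)) \<le> \<eta> * (\<Sum>i\<in>A. ?L T i)"
      by (simp add: sum_subtractf sum_distrib_left)
    show "\<eta> * (\<Sum>s<T. \<Sum>i<d. ?l s i * indicator (S s i) r) \<le> h r"
    proof -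
      have "\<eta> * (\<Sum>s<T. \<Sum>i<d. ?l s i * indicator (S s i) r) = \<eta> * g r" using g_eq[OF r] by simp
      then show ?thesis using b b1 b2 unfolding h_def by linarith
    qed
  qed
  have "\<eta> * (\<integral>r. (\<Sum>s<T. \<Sum>i<d. ?l s i * indicator (S s i) r) \<partial>?R) = (\<integral>r. \<eta> * (\<Sum>s<T. \<Sum>i<d. ?l s i * indicator (S s i) r) \<partial>?R)"
    by simp
  also have "\<dots> \<le> (\<integral>r. h r \<partial>?R)"
    by (rule integral_mono_AE[OF _ int_h ptw]) (use int_g in auto)
  also have "\<dots> \<le> real m * c + real d * (c powr (1 - \<alpha>) / (\<alpha> - 1)) + \<eta> * (\<Sum>i\<in>A. ?L T i)"
    by (rule val_h)
  finally have "\<eta> * (\<Sum>t<T. \<Sum>i<d. lhat d m \<eta> ell t \<omega> i * wprob d m \<eta> D ell (Suc t) \<omega> i)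
     \<le> real m * c + real d * (c powr (1 - \<alpha>) / (\<alpha> - 1)) + \<eta> * (\<Sum>i\<in>A. ?L T i)"
    unfolding int_g_val .
  then show ?thesis using eta by (simp add: field_simps)
qed



lemma int_sum2:
  fixes f :: "'i \<Rightarrow> 'j \<Rightarrow> 'a \<Rightarrow> real"
  assumes "\<And>t i. t \<in> S \<Longrightarrow> i \<in> I \<Longrightarrow> integrable M (f t i)"
  shows "integrable M (\<lambda>\<omega>. \<Sum>t\<in>S. \<Sum>i\<in>I. f t i \<omega>)"
    and "(\<integral>\<omega>. (\<Sum>t\<in>S. \<Sum>i\<in>I. f t i \<omega>) \<partial>M) = (\<Sum>t\<in>S. \<Sum>i\<in>I. \<integral>\<omega>. f t i \<omega> \<partial>M)"
proof -
  have i1: "integrable M (\<lambda>\<omega>. \<Sum>i\<in>I. f t i \<omega>)" if "t \<in> S" for t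
    by (rule Bochner_Integration.integrable_sum) (use assms that in auto)
  show "integrable M (\<lambda>\<omega>. \<Sum>t\<in>S. \<Sum>i\<in>I. f t i \<omega>)"
    by (rule Bochner_Integration.integrable_sum) (rule i1)
  have "(\<integral>\<omega>. (\<Sum>t\<in>S. \<Sum>i\<in>I. f t i \<omega>) \<partial>M) = (\<Sum>t\<in>S. \<integral>\<omega>. (\<Sum>i\<in>I. f t i \<omega>) \<partial>M)"
    by (rule Bochner_Integration.integral_sum) (rule i1)
  also have "\<dots> = (\<Sum>t\<in>S. \<Sum>i\<in>I. \<integral>\<omega>. f t i \<omega> \<partial>M)"
    by (intro sum.cong refl Bochner_Integration.integral_sum) (use assms in auto)
  finally show "(\<integral>\<omega>. (\<Sum>t\<in>S. \<Sum>i\<in>I. f t i \<omega>) \<partial>M) = (\<Sum>t\<in>S. \<Sum>i\<in>I. \<integral>\<omega>. f t i \<omega> \<partial>M)" .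
qed

lemma main_generic:
  fixes D :: "real measure" and \<alpha> c \<eta> :: real
  assumes D: "real_distribution D" and adv: "admissible_adv d D ell"
    and phipos: "\<And>lam i. i < d \<Longrightarrow> 0 < phi d m D lam i"
    and eta: "\<eta> > 0" and md: "m \<le> d"
    and AEpos: "AE x in D. 0 < x" and a: "\<alpha> > 1" and c: "c \<ge> 1"
    and tail: "\<And>x. x \<ge> 1 \<Longrightarrow> 1 - cdf D x \<le> x powr (-\<alpha>)"
  shows "regret d m \<eta> D ell T \<le> stab_term d m \<eta> D ell T + (real m * c + real d * (c powr (1 - \<alpha>) / (\<alpha> - 1))) / \<eta>"
proof -
  interpret real_distribution D by (rule D)
  interpret O: prob_space "Omega D" by (rule Omega_prob[OF D])
  let ?l = "\<lambda>t \<omega> i. lhat d m \<eta> ell t \<omega> i"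
  let ?w = "\<lambda>t \<omega> i. wprob d m \<eta> D ell t \<omega> i"
  define Pen where "Pen = (real m * c + real d * (c powr (1 - \<alpha>) / (\<alpha> - 1))) / \<eta>"
  have int_l: "integrable (Omega D) (\<lambda>\<omega>. ?l t \<omega> i)" if "i < d" for t i
    by (rule E1(1)[OF D adv phipos that])
  have int_ell: "integrable (Omega D) (\<lambda>\<omega>. ell t \<omega> i)" if "i < d" for t i
    by (rule O.integrable_const_bound[where B=1]) (use ell_bnd[OF D adv phipos that] ell_meas[OF D adv phipos] in auto)
  have int_lw: "integrable (Omega D) (\<lambda>\<omega>. ?l t \<omega> i * ?w s \<omega> i)" if "i < d" for t s i
  proof (rule Bochner_Integration.integrable_bound[OF int_l[OF that]])
    show "(\<lambda>\<omega>. ?l t \<omega> i * ?w s \<omega> i) \<in> borel_measurable (Omega D)"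
      using lhat_meas[OF D adv] wprob_meas[OF D adv phipos] by measurable
    show "AE \<omega> in Omega D. norm (?l t \<omega> i * ?w s \<omega> i) \<le> norm (?l t \<omega> i)"
      using lhat_nonneg[OF adv] wprob_bnd[OF D adv phipos] by (auto intro!: mult_left_le)
  qed
  obtain As where As: "As \<in> actions d m" and AsMin: "Min ((\<lambda>A. \<integral>\<omega>. (\<Sum>t<T. \<Sum>i\<in>A. ell t \<omega> i) \<partial>Omega D) ` actions d m)
      = (\<integral>\<omega>. (\<Sum>t<T. \<Sum>i\<in>As. ell t \<omega> i) \<partial>Omega D)"
  proof -
    have fin: "finite (actions d m)" unfolding actions_def by (rule finite_subset[of _ "Pow {..<d}"]) auto
    have ne: "actions d m \<noteq> {}" using topm_actions[OF md] by blast
    have "Min ((\<lambda>A. \<integral>\<omega>. (\<Sum>t<T. \<Sum>i\<in>A. ell t \<omega> i) \<partial>Omega D) ` actions d m) \<in> (\<lambda>A. \<integral>\<omega>. (\<Sum>t<T. \<Sum>i\<in>A. ell t \<omega> i) \<partial>Omega D) ` actions d m"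
      using fin ne by (intro Min_in) auto
    then show ?thesis using that by auto
  qed
  have Asd: "As \<subseteq> {..<d}" using As unfolding actions_def by auto
  have finAs: "finite As" using Asd by (rule finite_subset) auto
  have s1: "(\<integral>\<omega>. (\<Sum>t<T. \<Sum>i\<in>action d m \<eta> ell t \<omega>. ell t \<omega> i) \<partial>Omega D) = (\<Sum>t<T. \<Sum>i<d. \<integral>\<omega>. ?l t \<omega> i * ?w t \<omega> i \<partial>Omega D)"
  proof -
    have eq: "(\<Sum>i\<in>action d m \<eta> ell t \<omega>. ell t \<omega> i) = (\<Sum>i<d. if i \<in> action d m \<eta> ell t \<omega> then ell t \<omega> i else 0)" for t \<omega>
    proof -
      have e: "{i\<in>{..<d}. i \<in> action d m \<eta> ell t \<omega>} = action d m \<eta> ell t \<omega>"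
        unfolding action_def play_def using topm_sub by blast
      have "(\<Sum>i<d. if i \<in> action d m \<eta> ell t \<omega> then ell t \<omega> i else 0) = (\<Sum>i\<in>{i\<in>{..<d}. i \<in> action d m \<eta> ell t \<omega>}. ell t \<omega> i)"
        by (rule sum.inter_filter[symmetric]) simp
      then show ?thesis unfolding e by simp
    qed
    have "(\<integral>\<omega>. (\<Sum>t<T. \<Sum>i\<in>action d m \<eta> ell t \<omega>. ell t \<omega> i) \<partial>Omega D)
       = (\<integral>\<omega>. (\<Sum>t<T. \<Sum>i<d. if i \<in> action d m \<eta> ell t \<omega> then ell t \<omega> i else 0) \<partial>Omega D)" by (simp only: eq)
    also have "\<dots> = (\<Sum>t<T. \<Sum>i<d. \<integral>\<omega>. (if i \<in> action d m \<eta> ell t \<omega> then ell t \<omega> i else 0) \<partial>Omega D)"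
      by (rule int_sum2(2)) (use E2(2)[OF D adv phipos] in auto)
    also have "\<dots> = (\<Sum>t<T. \<Sum>i<d. \<integral>\<omega>. ?l t \<omega> i * ?w t \<omega> i \<partial>Omega D)"
      by (intro sum.cong refl E2(3)[OF D adv phipos]) auto
    finally show ?thesis .
  qed
  have s2: "(\<integral>\<omega>. (\<Sum>t<T. \<Sum>i\<in>As. ell t \<omega> i) \<partial>Omega D) = (\<integral>\<omega>. (\<Sum>i\<in>As. Lhat d m \<eta> ell T \<omega> i) \<partial>Omega D)"
  proof -
    have "(\<integral>\<omega>. (\<Sum>t<T. \<Sum>i\<in>As. ell t \<omega> i) \<partial>Omega D) = (\<Sum>t<T. \<Sum>i\<in>As. \<integral>\<omega>. ell t \<omega> i \<partial>Omega D)"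
      by (rule int_sum2(2)) (use int_ell Asd in auto)
    also have "\<dots> = (\<Sum>t<T. \<Sum>i\<in>As. \<integral>\<omega>. ?l t \<omega> i \<partial>Omega D)"
      using E1(2)[OF D adv phipos] Asd by (intro sum.cong refl) auto
    also have "\<dots> = (\<integral>\<omega>. (\<Sum>i\<in>As. \<Sum>t<T. ?l t \<omega> i) \<partial>Omega D)"
      by (subst sum.swap, rule int_sum2(2)[symmetric]) (use int_l Asd in auto)
    also have "\<dots> = (\<integral>\<omega>. (\<Sum>i\<in>As. Lhat d m \<eta> ell T \<omega> i) \<partial>Omega D)"
      by (simp add: Lhat_sum)
    finally show ?thesis .
  qed
  have s3: "stab_term d m \<eta> D ell T = (\<Sum>t<T. \<Sum>i<d. \<integral>\<omega>. ?l t \<omega> i * ?w t \<omega> i \<partial>Omega D) - (\<Sum>t<T. \<Sum>i<d. \<integral>\<omega>. ?l t \<omega> i * ?w (Suc t) \<omega> i \<partial>Omega D)"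
  proof -
    have "(\<integral>\<omega>. (\<Sum>i<d. ?l t \<omega> i * (?w t \<omega> i - ?w (Suc t) \<omega> i)) \<partial>Omega D)
      = (\<Sum>i<d. \<integral>\<omega>. ?l t \<omega> i * ?w t \<omega> i \<partial>Omega D) - (\<Sum>i<d. \<integral>\<omega>. ?l t \<omega> i * ?w (Suc t) \<omega> i \<partial>Omega D)" for t
    proof -
      have "(\<integral>\<omega>. (\<Sum>i<d. ?l t \<omega> i * (?w t \<omega> i - ?w (Suc t) \<omega> i)) \<partial>Omega D) = (\<Sum>i<d. \<integral>\<omega>. ?l t \<omega> i * ?w t \<omega> i - ?l t \<omega> i * ?w (Suc t) \<omega> i \<partial>Omega D)"
        by (simp only: right_diff_distrib, rule Bochner_Integration.integral_sum) (use int_lw in auto)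
      also have "\<dots> = (\<Sum>i<d. (\<integral>\<omega>. ?l t \<omega> i * ?w t \<omega> i \<partial>Omega D) - (\<integral>\<omega>. ?l t \<omega> i * ?w (Suc t) \<omega> i \<partial>Omega D))"
        using int_lw by (intro sum.cong refl Bochner_Integration.integral_diff) auto
      finally show ?thesis by (simp add: sum_subtractf)
    qed
    then show ?thesis unfolding stab_term_def by (simp add: sum_subtractf)
  qed
  have s4: "(\<Sum>t<T. \<Sum>i<d. \<integral>\<omega>. ?l t \<omega> i * ?w (Suc t) \<omega> i \<partial>Omega D) - (\<integral>\<omega>. (\<Sum>i\<in>As. Lhat d m \<eta> ell T \<omega> i) \<partial>Omega D) \<le> Pen"
  proof -
    have intL: "integrable (Omega D) (\<lambda>\<omega>. \<Sum>i\<in>As. Lhat d m \<eta> ell T \<omega> i)"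
      unfolding Lhat_sum by (subst sum.swap, rule int_sum2(1)) (use int_l Asd in auto)
    have intG: "integrable (Omega D) (\<lambda>\<omega>. \<Sum>t<T. \<Sum>i<d. ?l t \<omega> i * ?w (Suc t) \<omega> i)"
      by (rule int_sum2(1)) (use int_lw in auto)
    have "(\<Sum>t<T. \<Sum>i<d. \<integral>\<omega>. ?l t \<omega> i * ?w (Suc t) \<omega> i \<partial>Omega D) - (\<integral>\<omega>. (\<Sum>i\<in>As. Lhat d m \<eta> ell T \<omega> i) \<partial>Omega D)
       = (\<integral>\<omega>. (\<Sum>t<T. \<Sum>i<d. ?l t \<omega> i * ?w (Suc t) \<omega> i) - (\<Sum>i\<in>As. Lhat d m \<eta> ell T \<omega> i) \<partial>Omega D)"
    proof -
      have e: "(\<integral>\<omega>. (\<Sum>t<T. \<Sum>i<d. ?l t \<omega> i * ?w (Suc t) \<omega> i) \<partial>Omega D) = (\<Sum>t<T. \<Sum>i<d. \<integral>\<omega>. ?l t \<omega> i * ?w (Suc t) \<omega> i \<partial>Omega D)"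
        by (rule int_sum2(2)) (use int_lw in auto)
      show ?thesis using intL intG e by (subst Bochner_Integration.integral_diff) simp_all
    qed
    also have "\<dots> \<le> (\<integral>\<omega>. Pen \<partial>Omega D)"
    proof (rule integral_mono)
      show "integrable (Omega D) (\<lambda>\<omega>. (\<Sum>t<T. \<Sum>i<d. ?l t \<omega> i * ?w (Suc t) \<omega> i) - (\<Sum>i\<in>As. Lhat d m \<eta> ell T \<omega> i))"
        using intL intG by auto
      show "integrable (Omega D) (\<lambda>\<omega>. Pen)" by simp
      fix \<omega>
      show "(\<Sum>t<T. \<Sum>i<d. ?l t \<omega> i * ?w (Suc t) \<omega> i) - (\<Sum>i\<in>As. Lhat d m \<eta> ell T \<omega> i) \<le> Pen"
        using btl_int[OF D eta md As AEpos a c tail, where T=T and ell=ell and \<omega>=\<omega>] unfolding Pen_def by simp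
    qed
    also have "\<dots> = Pen" by (simp add: O.prob_space)
    finally show ?thesis .
  qed
  show ?thesis
    unfolding regret_def AsMin s1 s2 s3 Pen_def[symmetric] using s4 by simp
qed



lemma pen_eq:
  fixes m d \<alpha> :: real
  assumes m: "m > 0" and dm: "d \<ge> m" and a: "\<alpha> > 1"
  shows "m * (d / m) powr (1 / \<alpha>) + d * (((d / m) powr (1 / \<alpha>)) powr (1 - \<alpha>) / (\<alpha> - 1))
     = \<alpha> / (\<alpha> - 1) * (m powr (1 - 1 / \<alpha>) * d powr (1 / \<alpha>))"
proof -
  have d: "d > 0" using m dm by linarith
  define u where "u = m powr (1 - 1 / \<alpha>) * d powr (1 / \<alpha>)"
  have t1: "m * (d / m) powr (1 / \<alpha>) = u"
  proof -
    have "m * (d / m) powr (1 / \<alpha>) = m powr 1 * (d powr (1 / \<alpha>) / m powr (1 / \<alpha>))"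
      using m d by (simp add: powr_divide)
    also have "\<dots> = (m powr 1 / m powr (1 / \<alpha>)) * d powr (1 / \<alpha>)" by simp
    also have "m powr 1 / m powr (1 / \<alpha>) = m powr (1 - 1 / \<alpha>)" by (rule powr_diff[symmetric])
    finally show ?thesis unfolding u_def .
  qed
  have t2: "d * ((d / m) powr (1 / \<alpha>)) powr (1 - \<alpha>) = u"
  proof -
    have e: "(1 - \<alpha>) / \<alpha> = 1 / \<alpha> - 1" using a by (simp add: field_simps)
    have "((d / m) powr (1 / \<alpha>)) powr (1 - \<alpha>) = (d / m) powr (1 / \<alpha> - 1)"
      by (simp add: powr_powr e)
    also have "\<dots> = d powr (1 / \<alpha> - 1) / m powr (1 / \<alpha> - 1)" using m d by (simp add: powr_divide)
    finally have "d * ((d / m) powr (1 / \<alpha>)) powr (1 - \<alpha>) = (d * d powr (1 / \<alpha> - 1)) / m powr (1 / \<alpha> - 1)"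
      by simp
    also have "d * d powr (1 / \<alpha> - 1) = d powr (1 / \<alpha>)" using d by (simp add: powr_mult_base)
    also have "1 / m powr (1 / \<alpha> - 1) = m powr (1 - 1 / \<alpha>)"
      using m by (simp add: powr_minus_divide[symmetric] powr_minus)
    then have "d powr (1 / \<alpha>) / m powr (1 / \<alpha> - 1) = m powr (1 - 1 / \<alpha>) * d powr (1 / \<alpha>)"
      by (metis divide_inverse inverse_eq_divide mult.commute)
    finally show ?thesis unfolding u_def .
  qed
  have "m * (d / m) powr (1 / \<alpha>) + d * (((d / m) powr (1 / \<alpha>)) powr (1 - \<alpha>) / (\<alpha> - 1)) = u + u / (\<alpha> - 1)"
    using t1 t2 by (simp add: times_divide_eq_right)
  also have "\<dots> = \<alpha> / (\<alpha> - 1) * u" using a by (simp add: field_simps)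
  finally show ?thesis unfolding u_def .
qed

lemma final_bound:
  fixes D :: "real measure" and \<alpha> \<eta> :: real and d m :: nat
  assumes D: "real_distribution D" and adv: "admissible_adv d D ell"
    and eta: "\<eta> > 0" and m1: "1 \<le> m" and md: "m \<le> d" and a: "\<alpha> > 1"
    and c0: "cdf D 0 = 0" and lt1: "\<And>x. cdf D x < 1" and gt0: "cdf D 2 > 0"
    and tail: "\<And>x. x \<ge> 1 \<Longrightarrow> 1 - cdf D x \<le> x powr (-\<alpha>)"
  shows "regret d m \<eta> D ell T \<le> stab_term d m \<eta> D ell T
     + (\<alpha> / (\<alpha> - 1) * real m powr (1 - 1 / \<alpha>) * real d powr (1 / \<alpha>)) / \<eta>"
proof -
  define c where "c = (real d / real m) powr (1 / \<alpha>)"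
  have c: "c \<ge> 1" unfolding c_def using m1 md a by (intro ge_one_powr_ge_zero) auto
  have phipos: "\<And>lam i. i < d \<Longrightarrow> 0 < phi d m D lam i"
    using phi_pos[OF D lt1 gt0 _ m1] by blast
  have "regret d m \<eta> D ell T \<le> stab_term d m \<eta> D ell T + (real m * c + real d * (c powr (1 - \<alpha>) / (\<alpha> - 1))) / \<eta>"
    by (rule main_generic[OF D adv phipos eta md pos_AE[OF D c0] a c tail])
  also have "real m * c + real d * (c powr (1 - \<alpha>) / (\<alpha> - 1)) = \<alpha> / (\<alpha> - 1) * real m powr (1 - 1 / \<alpha>) * real d powr (1 / \<alpha>)"
    unfolding c_def using pen_eq[of "real m" "real d" \<alpha>] m1 md a by (simp add: mult.assoc)
  finally show ?thesis .
qed

theorem lemma1: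
  fixes d m T :: nat and \<alpha> \<eta> :: real and D :: "real measure"
    and ell :: "nat \<Rightarrow> omega \<Rightarrow> nat \<Rightarrow> real"
  assumes "1 \<le> m" and "m \<le> d" and "\<alpha> > 1" and "\<eta> > 0"
    and "real_distribution D"
    and "admissible_adv d D ell"
  shows "(cdf D = frechet_cdf \<alpha> \<longrightarrow>
           regret d m \<eta> D ell T \<le> stab_term d m \<eta> D ell T
             + ((\<alpha> / (\<alpha> - 1) * real m powr (1 - 1 / \<alpha>) + Gamma (1 - 1 / \<alpha>))
                  * real (d + 1) powr (1 / \<alpha>) + real m) / \<eta>)
       \<and> (cdf D = pareto_cdf \<alpha> \<longrightarrow>
           regret d m \<eta> D ell T \<le> stab_term d m \<eta> D ell T
             + ((\<alpha> / (\<alpha> - 1) * real m powr (1 - 1 / \<alpha>) + Gamma (1 - 1 / \<alpha>))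
                  * real (d + 1) powr (1 / \<alpha>)) / \<eta>)"
proof -
  note m1 = assms(1) and md = assms(2) and a = assms(3) and eta = assms(4) and D = assms(5) and adv = assms(6)
  have G: "Gamma (1 - 1 / \<alpha>) > 0" using a by (intro Gamma_real_pos) (simp add: field_simps)
  have dd: "real d powr (1 / \<alpha>) \<le> real (d + 1) powr (1 / \<alpha>)" using a by (intro powr_mono2) auto
  have K0: "\<alpha> / (\<alpha> - 1) * real m powr (1 - 1 / \<alpha>) \<ge> 0" using a by simp
  have cmp: "\<alpha> / (\<alpha> - 1) * real m powr (1 - 1 / \<alpha>) * real d powr (1 / \<alpha>)
      \<le> (\<alpha> / (\<alpha> - 1) * real m powr (1 - 1 / \<alpha>) + Gamma (1 - 1 / \<alpha>)) * real (d + 1) powr (1 / \<alpha>)"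
  proof -
    have "\<alpha> / (\<alpha> - 1) * real m powr (1 - 1 / \<alpha>) * real d powr (1 / \<alpha>)
        \<le> \<alpha> / (\<alpha> - 1) * real m powr (1 - 1 / \<alpha>) * real (d + 1) powr (1 / \<alpha>)"
      using dd K0 by (intro mult_left_mono) auto
    also have "\<dots> \<le> (\<alpha> / (\<alpha> - 1) * real m powr (1 - 1 / \<alpha>) + Gamma (1 - 1 / \<alpha>)) * real (d + 1) powr (1 / \<alpha>)"
      using G by (simp add: distrib_right)
    finally show ?thesis .
  qed
  have fr: "cdf D = frechet_cdf \<alpha> \<Longrightarrow> regret d m \<eta> D ell T \<le> stab_term d m \<eta> D ell T
             + (\<alpha> / (\<alpha> - 1) * real m powr (1 - 1 / \<alpha>) * real d powr (1 / \<alpha>)) / \<eta>"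
  proof (rule final_bound[OF D adv eta m1 md a])
    assume F: "cdf D = frechet_cdf \<alpha>"
    show "cdf D 0 = 0" unfolding F frechet_cdf_def by simp
    show "cdf D x < 1" for x
      unfolding F frechet_cdf_def by auto
    show "cdf D 2 > 0" unfolding F frechet_cdf_def by simp
    show "1 - cdf D x \<le> x powr (-\<alpha>)" if "x \<ge> 1" for x
    proof -
      have "1 + (- (x powr (-\<alpha>))) \<le> exp (- (x powr (-\<alpha>)))" by (rule exp_ge_add_one_self)
      then show ?thesis unfolding F frechet_cdf_def using that by auto
    qed
  qed
  have pa: "cdf D = pareto_cdf \<alpha> \<Longrightarrow> regret d m \<eta> D ell T \<le> stab_term d m \<eta> D ell T
             + (\<alpha> / (\<alpha> - 1) * real m powr (1 - 1 / \<alpha>) * real d powr (1 / \<alpha>)) / \<eta>"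
  proof (rule final_bound[OF D adv eta m1 md a])
    assume F: "cdf D = pareto_cdf \<alpha>"
    show "cdf D 0 = 0" unfolding F pareto_cdf_def by simp
    show "cdf D x < 1" for x
      unfolding F pareto_cdf_def by auto
    show "cdf D 2 > 0"
    proof -
      have "(2::real) powr (-\<alpha>) < 2 powr 0" using a by (intro powr_less_mono) auto
      then show ?thesis unfolding F pareto_cdf_def by simp
    qed
    show "1 - cdf D x \<le> x powr (-\<alpha>)" if "x \<ge> 1" for x
      unfolding F pareto_cdf_def using that by simp
  qed
  have m0: "real m \<ge> 0" by simp
  show ?thesis
  proof (intro conjI impI)
    assume F: "cdf D = frechet_cdf \<alpha>"
    show "regret d m \<eta> D ell T \<le> stab_term d m \<eta> D ell T
             + ((\<alpha> / (\<alpha> - 1) * real m powr (1 - 1 / \<alpha>) + Gamma (1 - 1 / \<alpha>))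
                  * real (d + 1) powr (1 / \<alpha>) + real m) / \<eta>"
      using fr[OF F] cmp m0 eta by (smt (verit) divide_right_mono)
  next
    assume F: "cdf D = pareto_cdf \<alpha>"
    show "regret d m \<eta> D ell T \<le> stab_term d m \<eta> D ell T
             + ((\<alpha> / (\<alpha> - 1) * real m powr (1 - 1 / \<alpha>) + Gamma (1 - 1 / \<alpha>))
                  * real (d + 1) powr (1 / \<alpha>)) / \<eta>"
      using pa[OF F] cmp eta by (smt (verit) divide_right_mono)
  qed
qed


end
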